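(* The 2+2 t-warped (respectively, s-warped) spacetimes are exactly the spacetimes conformal to a 2+2 product of class $\binom10$ (respectively, $\binom01$).
   Context: A spacetime is a 4-dimensional oriented Lorentzian manifold $(M,g)$ of signature $(-,+,+,+)$; statements are local. $g$ is conformal to a 2+2 product if $g = e^{2\lambda}(\hat v+\hat h)$ where in suitable local coordinates $\hat v = \hat v_{ij}(x^1,x^2)dx^idx^j$ is a 2-dimensional Lorentzian metric and $\hat h = \hat h_{AB}(x^3,x^4)dx^Adx^B$ a 2-dimensional Riemannian metric. A 2+2 t-warped spacetime has (locally) $g = e^{2\lambda}\hat v + h$ with $\hat v$ a 2-dimensional Lorentzian metric in $(x^1,x^2)$, $h$ a 2-dimensional Riemannian metric in $(x^3,x^4)$, and $\lambda$ a non-constant function of $(x^3,x^4)$ only; a 2+2 s-warped spacetime has $g = v + e^{2\lambda}\hat h$ with $v$ Lorentzian in $(x^1,x^2)$, $\hat h$ Riemannian in $(x^3,x^4)$, $\lambda$ a non-constant function of $(x^1,x^2)$ only. For a metric conformal to a 2+2 product, the principal planes are the time-like plane $V$ tangent to the $\hat v$-factor, with $g$-orthogonal projector $v$, and its orthogonal space-like plane $H$ with projector $h=g-v$. With $Q_v(x,y) = h(\nabla_{v(x)}v(y))$, symmetric part $S_v$, and trace $\tr S_v = g^{\alpha\beta}S_v(e_\alpha,e_\beta)$, $V$ is minimal iff $\tr S_v=0$; analogously for $H$. Class $\binom10$: $H$ minimal and $V$ not; class $\binom01$: $V$ minimal and $H$ not. *)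

theory Defs
  imports "HOL-Analysis.Analysis"
begin

(* Local coordinate model: points of a coordinate patch are vectors in real^4,
   coordinate indices are 1,2,3,4 :: 4 (x^1,x^2 span the Lorentzian factor). *)

definition pdx :: "4 \<Rightarrow> (real^4 \<Rightarrow> 'b::real_normed_vector) \<Rightarrow> real^4 \<Rightarrow> 'b" where
  "pdx i f x = frechet_derivative f (at x) (axis i 1)"

fun Ck_on :: "nat \<Rightarrow> (real^4) set \<Rightarrow> (real^4 \<Rightarrow> real) \<Rightarrow> bool" where
  "Ck_on 0 D f = continuous_on D f"
| "Ck_on (Suc k) D f = ((\<forall>x\<in>D. f differentiable (at x)) \<and> (\<forall>i. Ck_on k D (pdx i f)))"

definition smooth_fun :: "(real^4) set \<Rightarrow> (real^4 \<Rightarrow> real) \<Rightarrow> bool" where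
  "smooth_fun D f = (\<forall>k. Ck_on k D f)"

definition smooth_vec :: "(real^4) set \<Rightarrow> (real^4 \<Rightarrow> real^4) \<Rightarrow> bool" where
  "smooth_vec D F = (\<forall>k. smooth_fun D (\<lambda>x. F x $ k))"

definition smooth_mat :: "(real^4) set \<Rightarrow> (real^4 \<Rightarrow> real^4^4) \<Rightarrow> bool" where
  "smooth_mat D A = (\<forall>a b. smooth_fun D (\<lambda>x. A x $ a $ b))"

definition bil :: "real^4^4 \<Rightarrow> real^4 \<Rightarrow> real^4 \<Rightarrow> real" where
  "bil A u w = u \<bullet> (A *v w)"

definition eta4 :: "4 \<Rightarrow> 4 \<Rightarrow> real" where
  "eta4 a b = (if a = b then (if a = 1 then -1 else 1) else 0)"

definition lorentzian4 :: "real^4^4 \<Rightarrow> bool" where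
  "lorentzian4 A = (transpose A = A \<and> (\<exists>e::4 \<Rightarrow> real^4. \<forall>a b. bil A (e a) (e b) = eta4 a b))"

definition Vidx :: "4 set" where "Vidx = {1, 2}"
definition Hidx :: "4 set" where "Hidx = {3, 4}"

definition coord_plane :: "4 set \<Rightarrow> (real^4) set" where
  "coord_plane S = span ((\<lambda>i. axis i (1::real)) ` S)"

definition block :: "4 set \<Rightarrow> real^4^4 \<Rightarrow> bool" where
  "block S A = (\<forall>a b. a \<notin> S \<or> b \<notin> S \<longrightarrow> A $ a $ b = 0)"

definition lorentzian2 :: "4 set \<Rightarrow> real^4^4 \<Rightarrow> bool" where
  "lorentzian2 S A = (transpose A = A \<and> (\<exists>u w. u \<in> coord_plane S \<and> w \<in> coord_plane S \<and>
      bil A u u = -1 \<and> bil A w w = 1 \<and> bil A u w = 0))"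

definition riemannian2 :: "4 set \<Rightarrow> real^4^4 \<Rightarrow> bool" where
  "riemannian2 S A = (transpose A = A \<and> (\<exists>u w. u \<in> coord_plane S \<and> w \<in> coord_plane S \<and>
      bil A u u = 1 \<and> bil A w w = 1 \<and> bil A u w = 0))"

definition dep12 :: "(real^4) set \<Rightarrow> (real^4 \<Rightarrow> 'b) \<Rightarrow> bool" where
  "dep12 D f = (\<exists>F. \<forall>x\<in>D. f x = F (x $ 1) (x $ 2))"

definition dep34 :: "(real^4) set \<Rightarrow> (real^4 \<Rightarrow> 'b) \<Rightarrow> bool" where
  "dep34 D f = (\<exists>F. \<forall>x\<in>D. f x = F (x $ 3) (x $ 4))"

definition product_domain :: "(real^4) set \<Rightarrow> bool" where
  "product_domain D = (\<exists>A B :: (real \<times> real) set. open A \<and> connected A \<and> open B \<and> connected B \<and>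
      D = {x. (x $ 1, x $ 2) \<in> A \<and> (x $ 3, x $ 4) \<in> B})"

definition spacetime :: "(real^4) set \<Rightarrow> (real^4 \<Rightarrow> real^4^4) \<Rightarrow> bool" where
  "spacetime U G = (open U \<and> smooth_mat U G \<and> (\<forall>x\<in>U. lorentzian4 (G x)))"

definition diffeo :: "(real^4 \<Rightarrow> real^4) \<Rightarrow> (real^4) set \<Rightarrow> (real^4) set \<Rightarrow> bool" where
  "diffeo \<phi> D W = (bij_betw \<phi> D W \<and> smooth_vec D \<phi> \<and>
      (\<exists>\<psi>. smooth_vec W \<psi> \<and> (\<forall>x\<in>D. \<psi> (\<phi> x) = x) \<and> (\<forall>y\<in>W. \<phi> (\<psi> y) = y)))"

text \<open>Components of the metric in the new coordinates given by the chart parametrisation phi.\<close>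
definition pullback :: "(real^4 \<Rightarrow> real^4^4) \<Rightarrow> (real^4 \<Rightarrow> real^4) \<Rightarrow> real^4 \<Rightarrow> real^4^4" where
  "pullback G \<phi> x = (\<chi> a b. bil (G (\<phi> x)) (pdx a \<phi> x) (pdx b \<phi> x))"

definition conf_product :: "(real^4 \<Rightarrow> real^4^4) \<Rightarrow> (real^4) set \<Rightarrow> bool" where
  "conf_product Gm D = (\<exists>lam vh hh. smooth_fun D lam \<and> smooth_mat D vh \<and> smooth_mat D hh \<and>
      dep12 D vh \<and> dep34 D hh \<and>
      (\<forall>x\<in>D. block Vidx (vh x) \<and> lorentzian2 Vidx (vh x) \<and> block Hidx (hh x) \<and> riemannian2 Hidx (hh x) \<and>
         Gm x = exp (2 * lam x) *\<^sub>R (vh x + hh x)))"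

definition t_warped :: "(real^4 \<Rightarrow> real^4^4) \<Rightarrow> (real^4) set \<Rightarrow> bool" where
  "t_warped Gm D = (\<exists>lam vh h. smooth_fun D lam \<and> smooth_mat D vh \<and> smooth_mat D h \<and>
      dep34 D lam \<and> (\<exists>x\<in>D. \<exists>y\<in>D. lam x \<noteq> lam y) \<and> dep12 D vh \<and> dep34 D h \<and>
      (\<forall>x\<in>D. block Vidx (vh x) \<and> lorentzian2 Vidx (vh x) \<and> block Hidx (h x) \<and> riemannian2 Hidx (h x) \<and>
         Gm x = exp (2 * lam x) *\<^sub>R vh x + h x))"

definition s_warped :: "(real^4 \<Rightarrow> real^4^4) \<Rightarrow> (real^4) set \<Rightarrow> bool" where
  "s_warped Gm D = (\<exists>lam v hh. smooth_fun D lam \<and> smooth_mat D v \<and> smooth_mat D hh \<and>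
      dep12 D lam \<and> (\<exists>x\<in>D. \<exists>y\<in>D. lam x \<noteq> lam y) \<and> dep12 D v \<and> dep34 D hh \<and>
      (\<forall>x\<in>D. block Vidx (v x) \<and> lorentzian2 Vidx (v x) \<and> block Hidx (hh x) \<and> riemannian2 Hidx (hh x) \<and>
         Gm x = v x + exp (2 * lam x) *\<^sub>R hh x))"

definition christoffel :: "(real^4 \<Rightarrow> real^4^4) \<Rightarrow> 4 \<Rightarrow> 4 \<Rightarrow> 4 \<Rightarrow> real^4 \<Rightarrow> real" where
  "christoffel Gm k i j x = (1/2) * (\<Sum>l\<in>UNIV. matrix_inv (Gm x) $ k $ l *
      (pdx i (\<lambda>y. Gm y $ j $ l) x + pdx j (\<lambda>y. Gm y $ i $ l) x - pdx l (\<lambda>y. Gm y $ i $ j) x))"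

definition cov :: "(real^4 \<Rightarrow> real^4^4) \<Rightarrow> real^4 \<Rightarrow> (real^4 \<Rightarrow> real^4) \<Rightarrow> real^4 \<Rightarrow> real^4" where
  "cov Gm X Y x = (\<chi> k. (\<Sum>i\<in>UNIV. X $ i * pdx i (\<lambda>y. Y y $ k) x) +
      (\<Sum>i\<in>UNIV. \<Sum>j\<in>UNIV. christoffel Gm k i j x * X $ i * Y x $ j))"

definition gproj :: "(real^4 \<Rightarrow> real^4^4) \<Rightarrow> 4 set \<Rightarrow> real^4 \<Rightarrow> real^4^4" where
  "gproj Gm S x = (THE P. (\<forall>u. P *v u \<in> coord_plane S) \<and>
      (\<forall>u w. w \<in> coord_plane S \<longrightarrow> bil (Gm x) (u - P *v u) w = 0))"

definition vproj :: "(real^4 \<Rightarrow> real^4^4) \<Rightarrow> real^4 \<Rightarrow> real^4^4" where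
  "vproj Gm x = gproj Gm Vidx x"

definition hproj :: "(real^4 \<Rightarrow> real^4^4) \<Rightarrow> real^4 \<Rightarrow> real^4^4" where
  "hproj Gm x = mat 1 - vproj Gm x"

definition Q_v :: "(real^4 \<Rightarrow> real^4^4) \<Rightarrow> real^4 \<Rightarrow> real^4 \<Rightarrow> real^4 \<Rightarrow> real^4" where
  "Q_v Gm u w x = hproj Gm x *v cov Gm (vproj Gm x *v u) (\<lambda>y. vproj Gm y *v w) x"

definition Q_h :: "(real^4 \<Rightarrow> real^4^4) \<Rightarrow> real^4 \<Rightarrow> real^4 \<Rightarrow> real^4 \<Rightarrow> real^4" where
  "Q_h Gm u w x = vproj Gm x *v cov Gm (hproj Gm x *v u) (\<lambda>y. hproj Gm y *v w) x"

definition tr_S_v :: "(real^4 \<Rightarrow> real^4^4) \<Rightarrow> real^4 \<Rightarrow> real^4" where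
  "tr_S_v Gm x = (\<Sum>a\<in>UNIV. \<Sum>b\<in>UNIV. matrix_inv (Gm x) $ a $ b *\<^sub>R
      ((1/2) *\<^sub>R (Q_v Gm (axis a 1) (axis b 1) x + Q_v Gm (axis b 1) (axis a 1) x)))"

definition tr_S_h :: "(real^4 \<Rightarrow> real^4^4) \<Rightarrow> real^4 \<Rightarrow> real^4" where
  "tr_S_h Gm x = (\<Sum>a\<in>UNIV. \<Sum>b\<in>UNIV. matrix_inv (Gm x) $ a $ b *\<^sub>R
      ((1/2) *\<^sub>R (Q_h Gm (axis a 1) (axis b 1) x + Q_h Gm (axis b 1) (axis a 1) x)))"

definition minimal_V :: "(real^4 \<Rightarrow> real^4^4) \<Rightarrow> (real^4) set \<Rightarrow> bool" where
  "minimal_V Gm D = (\<forall>x\<in>D. tr_S_v Gm x = 0)"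

definition minimal_H :: "(real^4 \<Rightarrow> real^4^4) \<Rightarrow> (real^4) set \<Rightarrow> bool" where
  "minimal_H Gm D = (\<forall>x\<in>D. tr_S_h Gm x = 0)"

definition class10 :: "(real^4 \<Rightarrow> real^4^4) \<Rightarrow> (real^4) set \<Rightarrow> bool" where
  "class10 Gm D = (minimal_H Gm D \<and> \<not> minimal_V Gm D)"

definition class01 :: "(real^4 \<Rightarrow> real^4^4) \<Rightarrow> (real^4) set \<Rightarrow> bool" where
  "class01 Gm D = (minimal_V Gm D \<and> \<not> minimal_H Gm D)"

definition locally_chart :: "((real^4 \<Rightarrow> real^4^4) \<Rightarrow> (real^4) set \<Rightarrow> bool) \<Rightarrow> (real^4) set \<Rightarrow> (real^4 \<Rightarrow> real^4^4) \<Rightarrow> bool" where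
  "locally_chart P U G = (\<forall>p\<in>U. \<exists>W D \<phi>. open W \<and> p \<in> W \<and> W \<subseteq> U \<and> product_domain D \<and>
      diffeo \<phi> D W \<and> P (pullback G \<phi>) D)"

end

theory Submission
  imports Defs
begin

lemma pdx_has: "(f has_derivative f') (at x) \<Longrightarrow> pdx i f x = f' (axis i 1)"
  unfolding pdx_def by (metis frechet_derivative_at)

lemma pdx_has_on:
  assumes "(f has_derivative f') (at x)" "open D" "x \<in> D" "\<And>y. y \<in> D \<Longrightarrow> f y = g y"
  shows "pdx i g x = f' (axis i 1)"
  by (rule pdx_has, rule has_derivative_transform_within_open[OF assms])

lemma diff_on_cong:
  assumes "f differentiable at x" "open D" "x \<in> D" "\<And>y. y \<in> D \<Longrightarrow> f y = g y"
  shows "g differentiable at x"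
  using assms unfolding differentiable_def
  by (meson has_derivative_transform_within_open)

lemma pdx_local:
  assumes "f differentiable at x" "open D" "x \<in> D" "\<And>y. y \<in> D \<Longrightarrow> f y = g y"
  shows "pdx i f x = pdx i g x"
  unfolding pdx_def using frechet_derivative_transform_within_open[OF assms] by simp

lemma pdx_const_on:
  assumes "open D" "x \<in> D" "\<And>y. y \<in> D \<Longrightarrow> f y = c"
  shows "pdx i f x = 0"
proof -
  have "((\<lambda>y. c) has_derivative (\<lambda>h. 0)) (at x)" by (rule has_derivative_const)
  from pdx_has_on[OF this assms(1,2)] assms(3) show ?thesis by auto
qed

lemma Ck_cong:
  assumes "open D" "\<And>x. x\<in>D \<Longrightarrow> f x = g x" "Ck_on k D f"
  shows "Ck_on k D g"
  using assms(2,3)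
proof (induction k arbitrary: f g)
  case 0
  then show ?case using continuous_on_cong by (metis Ck_on.simps(1))
next
  case (Suc k)
  have d: "\<And>x. x\<in>D \<Longrightarrow> f differentiable at x" using Suc.prems by simp
  have "g differentiable at x" if "x \<in> D" for x
    by (rule diff_on_cong[OF d[OF that] assms(1) that Suc.prems(1)])
  moreover have "Ck_on k D (pdx i g)" for i
  proof -
    have "Ck_on k D (pdx i f)" using Suc.prems by simp
    moreover have "\<And>x. x \<in> D \<Longrightarrow> pdx i f x = pdx i g x"
      by (rule pdx_local[OF d assms(1) _ Suc.prems(1)])
    ultimately show ?thesis using Suc.IH by blast
  qed
  ultimately show ?case by simp
qed

lemma Ck_mono: "Ck_on (Suc k) D f \<Longrightarrow> Ck_on k D f"
proof (induction k arbitrary: f)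
  case 0
  then show ?case
    by (simp add: continuous_at_imp_continuous_on differentiable_imp_continuous_within)
next
  case (Suc k)
  then show ?case by simp
qed

lemma Ck_const: "Ck_on k D (\<lambda>x. c)"
proof (induction k arbitrary: c)
  case 0 then show ?case by simp
next
  case (Suc k)
  have "pdx i (\<lambda>x. c) x = 0" for i x using pdx_has[of "\<lambda>x. c" "\<lambda>h. 0" x i] by simp
  hence "pdx i (\<lambda>x. c) = (\<lambda>x. 0)" for i by (simp add: fun_eq_iff)
  then show ?case using Suc by simp
qed

lemma Ck_add_mult:
  assumes "open D"
  shows "Ck_on k D f \<Longrightarrow> Ck_on k D g \<Longrightarrow> Ck_on k D (\<lambda>x. f x + g x) \<and> Ck_on k D (\<lambda>x. f x * g x)"
proof (induction k arbitrary: f g)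
  case 0 then show ?case by (simp add: continuous_on_add continuous_on_mult)
next
  case (Suc k)
  have df: "\<forall>x\<in>D. f differentiable at x" and dg: "\<forall>x\<in>D. g differentiable at x"
    using Suc.prems by auto
  have kf: "Ck_on k D f" "Ck_on k D g" using Suc.prems Ck_mono by auto
  have pf: "Ck_on k D (pdx i f)" "Ck_on k D (pdx i g)" for i using Suc.prems by auto
  have "Ck_on k D (pdx i (\<lambda>x. f x + g x))" for i
  proof -
    have eq: "pdx i (\<lambda>x. f x + g x) x = pdx i f x + pdx i g x" if "x \<in> D" for x
    proof -
      from df dg that obtain f' g' where a: "(f has_derivative f') (at x)" "(g has_derivative g') (at x)"
        unfolding differentiable_def by blast
      have "((\<lambda>x. f x + g x) has_derivative (\<lambda>h. f' h + g' h)) (at x)"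
        by (rule has_derivative_add[OF a])
      note h = this
      show ?thesis using pdx_has[OF h] pdx_has[OF a(1)] pdx_has[OF a(2)] by simp
    qed
    have "Ck_on k D (\<lambda>x. pdx i f x + pdx i g x)" using Suc.IH[OF pf(1) pf(2)] by blast
    then show ?thesis
      by (rule Ck_cong[OF assms, rotated]) (simp add: eq)
  qed
  moreover have "Ck_on k D (pdx i (\<lambda>x. f x * g x))" for i
  proof -
    have eq: "pdx i (\<lambda>x. f x * g x) x = f x * pdx i g x + pdx i f x * g x" if "x \<in> D" for x
    proof -
      from df dg that obtain f' g' where a: "(f has_derivative f') (at x)" "(g has_derivative g') (at x)"
        unfolding differentiable_def by blast
      have "((\<lambda>x. f x * g x) has_derivative (\<lambda>h. f x * g' h + f' h * g x)) (at x)"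
        by (rule has_derivative_mult[OF a])
      note h = this
      show ?thesis using pdx_has[OF h] pdx_has[OF a(1)] pdx_has[OF a(2)] by simp
    qed
    have m1: "Ck_on k D (\<lambda>x. f x * pdx i g x)" using Suc.IH[OF kf(1) pf(2)] by blast
    have m2: "Ck_on k D (\<lambda>x. pdx i f x * g x)" using Suc.IH[OF pf(1) kf(2)] by blast
    have "Ck_on k D (\<lambda>x. f x * pdx i g x + pdx i f x * g x)" using Suc.IH[OF m1 m2] by blast
    then show ?thesis
      by (rule Ck_cong[OF assms, rotated]) (simp add: eq)
  qed
  moreover have "\<forall>x\<in>D. (\<lambda>x. f x + g x) differentiable at x" "\<forall>x\<in>D. (\<lambda>x. f x * g x) differentiable at x"
    using df dg by auto
  ultimately show ?case by simp
qed

lemma Ck_exp: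
  assumes "open D"
  shows "Ck_on k D f \<Longrightarrow> Ck_on k D (\<lambda>x. exp (f x))"
proof (induction k arbitrary: f)
  case 0 then show ?case by (simp add: continuous_on_exp)
next
  case (Suc k)
  have df: "\<forall>x\<in>D. f differentiable at x" using Suc.prems by auto
  have kf: "Ck_on k D f" using Suc.prems Ck_mono by auto
  have pf: "Ck_on k D (pdx i f)" for i using Suc.prems by auto
  have hd: "((\<lambda>x. exp (f x)) has_derivative (\<lambda>h. exp (f x) * f' h)) (at x)"
    if "(f has_derivative f') (at x)" for x f'
    using has_derivative_exp[OF that] by (simp add: mult.commute)
  have "Ck_on k D (pdx i (\<lambda>x. exp (f x)))" for i
  proof -
    have eq: "pdx i (\<lambda>x. exp (f x)) x = exp (f x) * pdx i f x" if "x \<in> D" for x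
    proof -
      from df that obtain f' where a: "(f has_derivative f') (at x)"
        unfolding differentiable_def by blast
      show ?thesis using pdx_has[OF hd[OF a]] pdx_has[OF a] by simp
    qed
    have "Ck_on k D (\<lambda>x. exp (f x) * pdx i f x)"
      using Ck_add_mult[OF assms Suc.IH[OF kf] pf] by blast
    then show ?thesis
      by (rule Ck_cong[OF assms, rotated]) (simp add: eq)
  qed
  moreover have "(\<lambda>x. exp (f x)) differentiable at x" if "x \<in> D" for x
  proof -
    from df that obtain f' where a: "(f has_derivative f') (at x)"
      unfolding differentiable_def by blast
    show ?thesis using hd[OF a] unfolding differentiable_def by blast
  qed
  ultimately show ?case by simp
qed

lemma smooth_mult: "open D \<Longrightarrow> smooth_fun D f \<Longrightarrow> smooth_fun D g \<Longrightarrow> smooth_fun D (\<lambda>x. f x * g x)"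
  unfolding smooth_fun_def using Ck_add_mult by blast

lemma smooth_const: "smooth_fun D (\<lambda>x. c)"
  unfolding smooth_fun_def using Ck_const by blast

lemma smooth_exp_scale: "open D \<Longrightarrow> smooth_fun D f \<Longrightarrow> smooth_fun D (\<lambda>x. exp (c * f x))"
proof -
  assume D: "open D" and f: "smooth_fun D f"
  have "smooth_fun D (\<lambda>x. c * f x)" by (rule smooth_mult[OF D smooth_const f])
  then show ?thesis unfolding smooth_fun_def using Ck_exp[OF D] by blast
qed

lemma smooth_diff: "smooth_fun D f \<Longrightarrow> x \<in> D \<Longrightarrow> f differentiable at x"
  unfolding smooth_fun_def by (metis Ck_on.simps(2))

lemma four_neq[simp]: "(1::4) \<noteq> 2" "(1::4) \<noteq> 3" "(1::4) \<noteq> 4" "(2::4) \<noteq> 3" "(2::4) \<noteq> 4" "(3::4) \<noteq> 4"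
  "(2::4) \<noteq> 1" "(3::4) \<noteq> 1" "(4::4) \<noteq> 1" "(3::4) \<noteq> 2" "(4::4) \<noteq> 2" "(4::4) \<noteq> 3"
  by simp_all

lemma VH_compl: "k \<in> Hidx \<longleftrightarrow> k \<notin> Vidx"
  unfolding Vidx_def Hidx_def using exhaust_4[of k] by auto

definition diagS :: "4 set \<Rightarrow> real^4^4" where
  "diagS S = (\<chi> a b. if a = b \<and> a \<in> S then 1 else 0)"

lemma diagS_mv: "(diagS S *v u) $ k = (if k \<in> S then u $ k else 0)"
proof -
  have "(\<Sum>j\<in>UNIV. (if k = j \<and> k \<in> S then 1 else 0) * u$j) = (\<Sum>j\<in>UNIV. if k = j then (if k\<in>S then u$j else 0) else 0)"
    by (rule sum.cong) auto
  also have "\<dots> = (if k \<in> S then u $ k else 0)" by (simp add: sum.delta)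
  finally show ?thesis unfolding diagS_def matrix_vector_mult_def by simp
qed

lemma bil_full: "bil M u v = (\<Sum>a\<in>UNIV. \<Sum>b\<in>UNIV. u$a * M$a$b * v$b)"
  unfolding bil_def inner_vec_def matrix_vector_mult_def
  by (simp add: sum_distrib_left mult.assoc)

lemma bil_axis: "bil M (axis a 1) (axis b 1) = M$a$b"
  unfolding bil_def by (simp add: inner_axis' matrix_vector_mul_component inner_axis)

lemma coord_plane_iff: "u \<in> coord_plane S \<longleftrightarrow> (\<forall>k. k \<notin> S \<longrightarrow> u$k = 0)"
proof
  assume "u \<in> coord_plane S"
  moreover have "span ((\<lambda>i. axis i (1::real)) ` S) \<subseteq> {u. \<forall>k. k \<notin> S \<longrightarrow> u$k = 0}"
    by (rule span_minimal) (auto simp: subspace_def axis_def)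
  ultimately show "\<forall>k. k \<notin> S \<longrightarrow> u$k = 0" unfolding coord_plane_def by blast
next
  assume h: "\<forall>k. k \<notin> S \<longrightarrow> u$k = 0"
  have "u = (\<Sum>i\<in>UNIV. (u$i) *s axis i 1)" by (simp add: basis_expansion)
  also have "\<dots> = (\<Sum>i\<in>UNIV. (u$i) *\<^sub>R axis i 1)" by (simp add: scalar_mult_eq_scaleR)
  also have "\<dots> = (\<Sum>i\<in>S. (u$i) *\<^sub>R axis i 1)"
    by (rule sum.mono_neutral_right) (use h in \<open>auto simp: scalar_mult_eq_scaleR\<close>)
  also have "\<dots> \<in> coord_plane S" unfolding coord_plane_def
    by (intro span_sum span_scale span_base) auto
  finally show "u \<in> coord_plane S" .
qed

lemma sum_pair:
  assumes "i \<noteq> j" "\<And>k. k \<noteq> i \<Longrightarrow> k \<noteq> j \<Longrightarrow> f k = 0"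
  shows "(\<Sum>k\<in>UNIV. f k) = f i + f (j::4)"
proof -
  have "(\<Sum>k\<in>UNIV. f k) = (\<Sum>k\<in>{i,j}. f k)"
    by (rule sum.mono_neutral_right) (use assms in auto)
  also have "\<dots> = f i + f j" using assms(1) by simp
  finally show ?thesis .
qed

lemma bil_pair:
  assumes "i \<noteq> j" "\<And>k. k \<noteq> i \<Longrightarrow> k \<noteq> j \<Longrightarrow> u$k = 0" "\<And>k. k \<noteq> i \<Longrightarrow> k \<noteq> j \<Longrightarrow> v$k = 0"
  shows "bil M u v = u$i*M$i$i* v$i + u$i*M$i$j* v$j + u$j*M$j$i* v$i + u$j*M$j$j* v$j"
proof -
  have "bil M u v = (\<Sum>a\<in>UNIV. \<Sum>b\<in>UNIV. u$a * M$a$b * v$b)" by (rule bil_full)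
  also have "\<dots> = (\<Sum>a\<in>UNIV. u$a * M$a$i * v$i + u$a * M$a$j * v$j)"
    by (rule sum.cong[OF refl], rule sum_pair[OF assms(1)]) (use assms(3) in simp)
  also have "\<dots> = u$i*M$i$i* v$i + u$i*M$i$j* v$j + (u$j*M$j$i* v$i + u$j*M$j$j* v$j)"
    by (rule sum_pair[OF assms(1)]) (use assms(2) in simp)
  finally show ?thesis by simp
qed

lemma gram_nd:
  fixes M :: "real^4^4"
  assumes "i \<noteq> j" "M$j$i = M$i$j"
    "\<And>k. k \<noteq> i \<Longrightarrow> k \<noteq> j \<Longrightarrow> u$k = 0" "\<And>k. k \<noteq> i \<Longrightarrow> k \<noteq> j \<Longrightarrow> w$k = 0"
    "bil M u u = e" "bil M w w = 1" "bil M u w = 0" "e \<noteq> 0"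
  shows "M$i$i*M$j$j - M$i$j*M$i$j \<noteq> 0"
proof
  assume d: "M$i$i*M$j$j - M$i$j*M$i$j = 0"
  define p q r where "p = M$i$i" "q = M$i$j" "r = M$j$j"
  have uu: "bil M u u = p*(u$i)^2 + 2*q*u$i*u$j + r*(u$j)^2"
    using bil_pair[OF assms(1) assms(3) assms(3), of M] assms(2) unfolding p_q_r_def
    by (simp add: power2_eq_square algebra_simps)
  have ww: "bil M w w = p*(w$i)^2 + 2*q*w$i*w$j + r*(w$j)^2"
    using bil_pair[OF assms(1) assms(4) assms(4), of M] assms(2) unfolding p_q_r_def
    by (simp add: power2_eq_square algebra_simps)
  have uw: "bil M u w = p*u$i*w$i + q*(u$i*w$j + u$j*w$i) + r*u$j*w$j"
    using bil_pair[OF assms(1) assms(3) assms(4), of M] assms(2) unfolding p_q_r_def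
    by (simp add: algebra_simps)
  have "bil M u u * bil M w w - (bil M u w)^2 = (p*r - q*q) * (u$i*w$j - u$j*w$i)^2"
    unfolding uu ww uw by (simp add: power2_eq_square algebra_simps)
  also have "\<dots> = 0" using d unfolding p_q_r_def by simp
  finally show False using assms(5-8) by simp
qed

definition detV :: "real^4^4 \<Rightarrow> real" where "detV M = M$1$1*M$2$2 - M$1$2*M$1$2"
definition detH :: "real^4^4 \<Rightarrow> real" where "detH M = M$3$3*M$4$4 - M$3$4*M$3$4"
definition bdg :: "real^4^4 \<Rightarrow> bool" where
  "bdg M = (\<forall>a b. (a \<in> Vidx \<and> b \<in> Hidx) \<or> (a \<in> Hidx \<and> b \<in> Vidx) \<longrightarrow> M$a$b = 0)"
definition symm :: "real^4^4 \<Rightarrow> bool" where "symm M = (\<forall>a b. M$a$b = M$b$a)"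

definition invN :: "real^4^4 \<Rightarrow> real^4^4" where
  "invN M = (\<chi> a b. if a = 1 \<and> b = 1 then M$2$2/detV M else if a = 2 \<and> b = 2 then M$1$1/detV M
     else if (a = 1 \<and> b = 2) \<or> (a = 2 \<and> b = 1) then - M$1$2/detV M
     else if a = 3 \<and> b = 3 then M$4$4/detH M else if a = 4 \<and> b = 4 then M$3$3/detH M
     else if (a = 3 \<and> b = 4) \<or> (a = 4 \<and> b = 3) then - M$3$4/detH M else 0)"

lemma bdg_zeros:
  assumes "bdg M"
  shows "M$1$3 = 0" "M$1$4 = 0" "M$2$3 = 0" "M$2$4 = 0" "M$3$1 = 0" "M$4$1 = 0" "M$3$2 = 0" "M$4$2 = 0"
  using assms unfolding bdg_def Vidx_def Hidx_def by auto

lemma sq_ne: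
  fixes x y z :: real
  shows "x*y \<noteq> z*z \<Longrightarrow> x*(x*(y*y)) + z*(z*(z*z)) \<noteq> 2*(x*(z*(z*y)))"
proof
  assume a: "x*y \<noteq> z*z" and b: "x*(x*(y*y)) + z*(z*(z*z)) = 2*(x*(z*(z*y)))"
  have "(x*y - z*z)^2 = x*(x*(y*y)) + z*(z*(z*z)) - 2*(x*(z*(z*y)))" by (simp add: power2_eq_square algebra_simps)
  then have "(x*y - z*z)^2 = 0" using b by simp
  then show False using a by simp
qed

lemma invN_works:
  assumes "symm M" "bdg M" "detV M \<noteq> 0" "detH M \<noteq> 0"
  shows "M ** invN M = mat 1" "invN M ** M = mat 1"
proof -
  note z = bdg_zeros[OF assms(2)]
  have s: "M$2$1 = M$1$2" "M$4$3 = M$3$4" using assms(1) unfolding symm_def by auto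
  have dv: "M$1$1*M$2$2 - M$1$2*M$1$2 \<noteq> 0" and dh: "M$3$3*M$4$4 - M$3$4*M$3$4 \<noteq> 0"
    using assms(3,4) unfolding detV_def detH_def by auto
  show "M ** invN M = mat 1"
    unfolding invN_def detV_def detH_def
    using dv dh by (simp add: vec_eq_iff forall_4 matrix_matrix_mult_def sum_4 mat_def z s field_simps sq_ne)
  show "invN M ** M = mat 1"
    unfolding invN_def detV_def detH_def
    using dv dh by (simp add: vec_eq_iff forall_4 matrix_matrix_mult_def sum_4 mat_def z s field_simps sq_ne)
qed

lemma matrix_inv_invN:
  assumes "symm M" "bdg M" "detV M \<noteq> 0" "detH M \<noteq> 0"
  shows "invertible M" "matrix_inv M = invN M"
proof -
  note w = invN_works[OF assms]
  show "invertible M" unfolding invertible_def using w by blast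
  then have "\<exists>A'. M ** A' = mat 1 \<and> A' ** M = mat 1" unfolding invertible_def by blast
  then have h: "M ** matrix_inv M = mat 1 \<and> matrix_inv M ** M = mat 1"
    unfolding matrix_inv_def by (rule someI_ex)
  have "matrix_inv M = matrix_inv M ** (M ** invN M)" using w by (simp add: matrix_mul_rid)
  also have "\<dots> = (matrix_inv M ** M) ** invN M" by (simp add: matrix_mul_assoc)
  also have "\<dots> = invN M" using h by (simp add: matrix_mul_lid)
  finally show "matrix_inv M = invN M" .
qed

lemma gproj_pair:
  fixes M :: "real^4^4"
  assumes GM: "Gm x = M" and S: "S = {i,j}" and ij: "i \<noteq> j" and sy: "M$j$i = M$i$j"
    and dt: "M$i$i*M$j$j - M$i$j*M$i$j \<noteq> 0"
    and bz: "\<And>a b. a \<notin> S \<Longrightarrow> b \<in> S \<Longrightarrow> M$a$b = 0"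
  shows "gproj Gm S x = diagS S"
  unfolding gproj_def
proof (rule the_equality)
  show "(\<forall>u. diagS S *v u \<in> coord_plane S) \<and>
        (\<forall>u w. w \<in> coord_plane S \<longrightarrow> bil (Gm x) (u - diagS S *v u) w = 0)"
  proof (intro conjI allI impI)
    fix u show "diagS S *v u \<in> coord_plane S" by (simp add: coord_plane_iff diagS_mv)
  next
    fix u w assume w: "w \<in> coord_plane S"
    show "bil (Gm x) (u - diagS S *v u) w = 0"
      unfolding bil_full GM
    proof (intro sum.neutral ballI)
      fix a b
      show "(u - diagS S *v u) $ a * M $ a $ b * w $ b = 0"
        using w bz[of a b] by (cases "a \<in> S"; cases "b \<in> S") (auto simp: diagS_mv coord_plane_iff)
    qed
  qed
next
  fix P assume P: "(\<forall>u. P *v u \<in> coord_plane S) \<and>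
        (\<forall>u w. w \<in> coord_plane S \<longrightarrow> bil (Gm x) (u - P *v u) w = 0)"
  have ex: "\<forall>u w. w \<in> coord_plane S \<longrightarrow> bil (Gm x) (u - diagS S *v u) w = 0"
  proof (intro allI impI)
    fix u w assume w: "w \<in> coord_plane S"
    show "bil (Gm x) (u - diagS S *v u) w = 0"
      unfolding bil_full GM
    proof (intro sum.neutral ballI)
      fix a b
      show "(u - diagS S *v u) $ a * M $ a $ b * w $ b = 0"
        using w bz[of a b] by (cases "a \<in> S"; cases "b \<in> S") (auto simp: diagS_mv coord_plane_iff)
    qed
  qed
  have "P *v u = diagS S *v u" for u
  proof -
    define z where "z = P *v u - diagS S *v u"
    have zs: "\<And>k. k \<noteq> i \<Longrightarrow> k \<noteq> j \<Longrightarrow> z$k = 0"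
      using P unfolding z_def by (auto simp: coord_plane_iff diagS_mv S)
    have zb: "bil M z w = 0" if "w \<in> coord_plane S" for w
    proof -
      have "z = (u - diagS S *v u) - (u - P *v u)" unfolding z_def by simp
      then have "bil M z w = bil M (u - diagS S *v u) w - bil M (u - P *v u) w"
        unfolding bil_def by (simp add: inner_diff_left)
      then show ?thesis using P ex that GM by simp
    qed
    have ai: "axis i 1 \<in> coord_plane S" "axis j 1 \<in> coord_plane S"
      by (auto simp: coord_plane_iff S axis_def)
    have e1: "z$i*M$i$i + z$j*M$i$j = 0"
      using zb[OF ai(1)] bil_pair[OF ij zs, of "axis i 1" M] ij sy by (simp add: axis_def)
    have e2: "z$i*M$i$j + z$j*M$j$j = 0"
      using zb[OF ai(2)] bil_pair[OF ij zs, of "axis j 1" M] ij sy by (simp add: axis_def)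
    have "z$i * (M$i$i*M$j$j - M$i$j*M$i$j) = M$j$j * (z$i*M$i$i + z$j*M$i$j) - M$i$j * (z$i*M$i$j + z$j*M$j$j)"
      by (simp add: algebra_simps)
    then have "z$i = 0" using e1 e2 dt by simp
    moreover have "z$j * (M$i$i*M$j$j - M$i$j*M$i$j) = M$i$i * (z$i*M$i$j + z$j*M$j$j) - M$i$j * (z$i*M$i$i + z$j*M$i$j)"
      by (simp add: algebra_simps)
    then have "z$j = 0" using e1 e2 dt by simp
    ultimately have "z = 0" using zs by (metis vec_eq_iff zero_index)
    then show ?thesis unfolding z_def by simp
  qed
  then show "P = diagS S" by (simp add: matrix_eq)
qed

lemma diagS_compl: "mat 1 - diagS Vidx = diagS Hidx"
  unfolding diagS_def mat_def using VH_compl by (auto simp: vec_eq_iff)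

lemma sum_if_S: fixes S :: "4 set" and f :: "4 \<Rightarrow> real" shows "(\<Sum>a\<in>UNIV. if a \<in> S then f a else 0) = (\<Sum>a\<in>S. f a)"
  using sum.inter_restrict[of "UNIV::4 set" f S] by simp

lemma sum_delta_mult: fixes f :: "4 \<Rightarrow> real" shows "(\<Sum>j\<in>UNIV. f j * (if j \<in> S \<and> j = b then 1 else 0)) = (if b \<in> S then f b else (0::real))"
proof -
  have "(\<Sum>j\<in>UNIV. f j * (if j \<in> S \<and> j = b then 1 else 0)) = (\<Sum>j\<in>(UNIV::4 set). if b = j then (if b \<in> S then f b else 0) else 0)"
    by (rule sum.cong) auto
  then show ?thesis by (simp add: sum.delta)
qed

lemma diagS_axis: "(diagS S *v axis a 1) $ i = (if i \<in> S \<and> i = a then 1 else 0)"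
  by (auto simp: diagS_mv axis_def)

lemma core:
  fixes Gm :: "real^4 \<Rightarrow> real^4^4" and lam :: "real^4 \<Rightarrow> real" and A B :: "real^4 \<Rightarrow> real^4^4"
  assumes oD: "open D" and xD: "x \<in> D"
    and ST: "\<And>l. l \<in> T \<longleftrightarrow> l \<notin> S"
    and G: "\<And>y. y \<in> D \<Longrightarrow> Gm y = exp (2 * lam y) *\<^sub>R (A y + B y)"
    and bA: "\<And>y a b. y \<in> D \<Longrightarrow> a \<notin> S \<or> b \<notin> S \<Longrightarrow> A y $ a $ b = 0"
    and bB: "\<And>y a b. y \<in> D \<Longrightarrow> a \<notin> T \<or> b \<notin> T \<Longrightarrow> B y $ a $ b = 0"
    and dl: "lam differentiable at x"
    and dA: "\<And>a b. (\<lambda>y. A y $ a $ b) differentiable at x"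
    and pA: "\<And>l a b. l \<in> T \<Longrightarrow> pdx l (\<lambda>y. A y $ a $ b) x = 0"
    and Nz: "\<And>k l. (k \<in> T \<and> l \<in> S) \<or> (k \<in> S \<and> l \<in> T) \<Longrightarrow> matrix_inv (Gm x) $ k $ l = 0"
    and Ntr: "(\<Sum>a\<in>S. \<Sum>b\<in>S. matrix_inv (Gm x) $ a $ b * Gm x $ a $ b) = 2"
    and sym: "\<And>a b. Gm x $ a $ b = Gm x $ b $ a"
    and PS: "\<And>y. y \<in> D \<Longrightarrow> PS y = diagS S" and PT: "PT x = diagS T"
  shows "(\<Sum>a\<in>UNIV. \<Sum>b\<in>UNIV. matrix_inv (Gm x) $ a $ b *\<^sub>R ((1/2) *\<^sub>R
            (PT x *v cov Gm (PS x *v axis a 1) (\<lambda>y. PS y *v axis b 1) x +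
             PT x *v cov Gm (PS x *v axis b 1) (\<lambda>y. PS y *v axis a 1) x)))
         = (-2) *\<^sub>R (matrix_inv (Gm x) *v (\<chi> l. if l \<in> T then pdx l lam x else 0))"
proof -
  define N where "N = matrix_inv (Gm x)"
  define dT where "dT = (\<chi> l. if l \<in> T then pdx l lam x else 0)"
  define c where "c k = (N *v dT) $ k" for k
  obtain L where L: "(lam has_derivative L) (at x)" using dl unfolding differentiable_def by blast
  have Ll: "L (axis l 1) = pdx l lam x" for l using pdx_has[OF L] by simp
  have s1: "pdx l (\<lambda>y. Gm y $ i $ j) x = 2 * pdx l lam x * Gm x $ i $ j"
    if "i \<in> S" "j \<in> S" "l \<in> T" for i j l
  proof -
    obtain A' where A': "((\<lambda>y. A y $ i $ j) has_derivative A') (at x)"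
      using dA unfolding differentiable_def by blast
    have A'l: "A' (axis l 1) = 0" using pdx_has[OF A'] pA[OF that(3)] by metis
    have e: "((\<lambda>y. exp (2 * lam y)) has_derivative (\<lambda>h. 2 * L h * exp (2 * lam x))) (at x)"
      by (rule has_derivative_exp[OF has_derivative_mult_right[OF L]])
    have m: "((\<lambda>y. exp (2 * lam y) * A y $ i $ j) has_derivative
        (\<lambda>h. exp (2 * lam x) * A' h + 2 * L h * exp (2 * lam x) * A x $ i $ j)) (at x)"
      by (rule has_derivative_mult[OF e A'])
    have eqD: "exp (2 * lam y) * A y $ i $ j = Gm y $ i $ j" if "y \<in> D" for y
      using G[OF that] bB[OF that, of i j] ST \<open>i \<in> S\<close> by simp
    have "pdx l (\<lambda>y. Gm y $ i $ j) x = exp (2 * lam x) * A' (axis l 1) + 2 * L (axis l 1) * exp (2 * lam x) * A x $ i $ j"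
      using pdx_has_on[OF m oD xD eqD] by simp
    also have "\<dots> = 2 * pdx l lam x * Gm x $ i $ j"
      using A'l Ll eqD[OF xD] by (simp add: algebra_simps)
    finally show ?thesis .
  qed
  have s2: "pdx i (\<lambda>y. Gm y $ j $ l) x = 0" if "(j \<in> S \<and> l \<in> T) \<or> (j \<in> T \<and> l \<in> S)" for i j l
  proof (rule pdx_const_on[OF oD xD])
    fix y assume "y \<in> D"
    then show "Gm y $ j $ l = 0" using G bA bB that ST by (metis (no_types, lifting) add_cancel_right_left scaleR_eq_0_iff vector_add_component vector_scaleR_component)
  qed
  have s3: "christoffel Gm k i j x = - Gm x $ i $ j * c k" if "k \<in> T" "i \<in> S" "j \<in> S" for k i j
  proof -
    have "(\<Sum>l\<in>UNIV. N $ k $ l * (pdx i (\<lambda>y. Gm y $ j $ l) x + pdx j (\<lambda>y. Gm y $ i $ l) x - pdx l (\<lambda>y. Gm y $ i $ j) x))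
        = (\<Sum>l\<in>UNIV. (-2 * Gm x $ i $ j) * (N $ k $ l * dT $ l))"
    proof (rule sum.cong[OF refl])
      fix l
      show "N $ k $ l * (pdx i (\<lambda>y. Gm y $ j $ l) x + pdx j (\<lambda>y. Gm y $ i $ l) x - pdx l (\<lambda>y. Gm y $ i $ j) x)
          = (-2 * Gm x $ i $ j) * (N $ k $ l * dT $ l)"
      proof (cases "l \<in> T")
        case True
        then show ?thesis using s1[OF that(2,3) True] s2[of j l i] s2[of i l j] that unfolding dT_def by simp
      next
        case False
        then have "l \<in> S" using ST by blast
        then show ?thesis using Nz[of k l] that unfolding N_def by simp
      qed
    qed
    also have "\<dots> = (-2 * Gm x $ i $ j) * c k"
      unfolding c_def matrix_vector_mult_def by (simp add: sum_distrib_left)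
    finally show ?thesis unfolding christoffel_def N_def by simp
  qed
  have s4: "cov Gm (PS x *v axis a 1) (\<lambda>y. PS y *v axis b 1) x $ k =
      (if a \<in> S \<and> b \<in> S then - Gm x $ a $ b * c k else 0)" if "k \<in> T" for a b k
  proof -
    have z1: "pdx i (\<lambda>y. (PS y *v axis b 1) $ k) x = 0" for i
      by (rule pdx_const_on[OF oD xD]) (simp add: PS)
    have "(\<Sum>i\<in>UNIV. \<Sum>j\<in>UNIV. christoffel Gm k i j x * (PS x *v axis a 1) $ i * (PS x *v axis b 1) $ j)
       = (\<Sum>i\<in>UNIV. (\<Sum>j\<in>UNIV. (christoffel Gm k i j x * (if i \<in> S \<and> i = a then 1 else 0)) * (if j \<in> S \<and> j = b then 1 else 0)))"
      by (simp add: PS[OF xD] diagS_axis)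
    also have "\<dots> = (\<Sum>i\<in>UNIV. if b \<in> S then christoffel Gm k i b x * (if i \<in> S \<and> i = a then 1 else 0) else 0)"
      by (simp only: sum_delta_mult)
    also have "\<dots> = (if b \<in> S then (\<Sum>i\<in>UNIV. christoffel Gm k i b x * (if i \<in> S \<and> i = a then 1 else 0)) else 0)"
      by simp
    also have "\<dots> = (if b \<in> S then (if a \<in> S then christoffel Gm k a b x else 0) else 0)"
      by (simp only: sum_delta_mult)
    also have "\<dots> = (if a \<in> S \<and> b \<in> S then - Gm x $ a $ b * c k else 0)"
      using s3[OF that] by simp
    finally show ?thesis unfolding cov_def using z1 by simp
  qed
  have s5: "(PT x *v cov Gm (PS x *v axis a 1) (\<lambda>y. PS y *v axis b 1) x) $ k =
      (if k \<in> T \<and> a \<in> S \<and> b \<in> S then - Gm x $ a $ b * c k else 0)" for a b k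
    using s4 by (simp add: PT diagS_mv)
  show ?thesis
  proof (subst vec_eq_iff, intro allI)
    fix k
    have "(\<Sum>a\<in>UNIV. \<Sum>b\<in>UNIV. N $ a $ b *\<^sub>R ((1/2) *\<^sub>R
            (PT x *v cov Gm (PS x *v axis a 1) (\<lambda>y. PS y *v axis b 1) x +
             PT x *v cov Gm (PS x *v axis b 1) (\<lambda>y. PS y *v axis a 1) x))) $ k
        = (\<Sum>a\<in>UNIV. \<Sum>b\<in>UNIV. if a \<in> S then (if b \<in> S then (if k \<in> T then - c k * (N $ a $ b * Gm x $ a $ b) else 0) else 0) else 0)"
      apply (simp only: sum_component vector_scaleR_component vector_add_component)
      apply (rule sum.cong[OF refl], rule sum.cong[OF refl])
      apply (auto simp: s5 sym)
      done
    also have "\<dots> = (\<Sum>a\<in>UNIV. if a \<in> S then (\<Sum>b\<in>UNIV. if b \<in> S then (if k \<in> T then - c k * (N $ a $ b * Gm x $ a $ b) else 0) else 0) else 0)"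
      by (rule sum.cong[OF refl]) (case_tac "xa \<in> S", auto)
    also have "\<dots> = (\<Sum>a\<in>S. \<Sum>b\<in>S. (if k \<in> T then - c k * (N $ a $ b * Gm x $ a $ b) else 0))"
      by (simp only: sum_if_S)
    also have "\<dots> = (if k \<in> T then - c k * (\<Sum>a\<in>S. \<Sum>b\<in>S. N $ a $ b * Gm x $ a $ b) else 0)"
      by (simp add: sum_distrib_left)
    also have "\<dots> = ((-2) *\<^sub>R (N *v dT)) $ k"
    proof (cases "k \<in> T")
      case True then show ?thesis using Ntr unfolding N_def c_def by simp
    next
      case False
      then have "k \<in> S" using ST by blast
      have "(N *v dT) $ k = 0" unfolding matrix_vector_mult_def vec_lambda_beta
        by (rule sum.neutral) (use Nz[of k] \<open>k \<in> S\<close> in \<open>auto simp: dT_def N_def\<close>)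
      then show ?thesis using False by simp
    qed
    finally show "(\<Sum>a\<in>UNIV. \<Sum>b\<in>UNIV. matrix_inv (Gm x) $ a $ b *\<^sub>R ((1/2) *\<^sub>R
            (PT x *v cov Gm (PS x *v axis a 1) (\<lambda>y. PS y *v axis b 1) x +
             PT x *v cov Gm (PS x *v axis b 1) (\<lambda>y. PS y *v axis a 1) x))) $ k
        = ((-2) *\<^sub>R (matrix_inv (Gm x) *v (\<chi> l. if l \<in> T then pdx l lam x else 0))) $ k"
      unfolding N_def dT_def .
  qed
qed

lemma product_domain_open:
  assumes "product_domain D" shows "open D"
proof -
  obtain A B where AB: "open A" "open B" "D = {x. (x $ 1, x $ 2) \<in> A \<and> (x $ 3, x $ 4) \<in> B}"
    using assms unfolding product_domain_def by blast
  have "open ((\<lambda>x::real^4. (x$1, x$2)) -` A)"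
    by (rule continuous_open_vimage[OF AB(1)]) (auto intro!: continuous_intros)
  moreover have "open ((\<lambda>x::real^4. (x$3, x$4)) -` B)"
    by (rule continuous_open_vimage[OF AB(2)]) (auto intro!: continuous_intros)
  ultimately have "open ((\<lambda>x::real^4. (x$1, x$2)) -` A \<inter> (\<lambda>x::real^4. (x$3, x$4)) -` B)" by auto
  moreover have "D = (\<lambda>x::real^4. (x$1, x$2)) -` A \<inter> (\<lambda>x::real^4. (x$3, x$4)) -` B" using AB(3) by auto
  ultimately show ?thesis by simp
qed

lemma slice:
  fixes lam :: "real^4 \<Rightarrow> real" and A :: "(real \<times> real) set"
  assumes oA: "open A" and cA: "connected A" and ij: "i \<noteq> j"
    and Tdef: "\<And>k. k \<in> T \<longleftrightarrow> k \<noteq> i \<and> k \<noteq> j"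
    and emb: "\<And>p. p \<in> A \<Longrightarrow> fst p *\<^sub>R axis i 1 + snd p *\<^sub>R axis j 1 + diagS T *v y \<in> D"
    and yA: "(y$i, y$j) \<in> A" and p0: "p0 \<in> A"
    and z: "\<And>z. z \<in> D \<Longrightarrow> lam differentiable at z \<and> pdx i lam z = 0 \<and> pdx j lam z = 0"
  shows "lam y = lam (fst p0 *\<^sub>R axis i 1 + snd p0 *\<^sub>R axis j 1 + diagS T *v y)"
proof -
  define E where "E p = fst p *\<^sub>R axis i 1 + snd p *\<^sub>R axis j 1 + diagS T *v y" for p :: "real \<times> real"
  have dE: "(E has_derivative (\<lambda>h. fst h *\<^sub>R axis i 1 + snd h *\<^sub>R axis j 1)) (at p)" for p
    unfolding E_def by (auto intro!: derivative_eq_intros)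
  have g0: "((\<lambda>p. lam (E p)) has_derivative (\<lambda>h. 0)) (at p)" if "p \<in> A" for p
  proof -
    have ED: "E p \<in> D" using emb[OF that] unfolding E_def .
    obtain L where L: "(lam has_derivative L) (at (E p))" using z[OF ED] unfolding differentiable_def by blast
    have Li: "L (axis i 1) = 0" "L (axis j 1) = 0" using z[OF ED] pdx_has[OF L] by auto
    have lin: "linear L" using has_derivative_linear[OF L] .
    have "((lam \<circ> E) has_derivative (L \<circ> (\<lambda>h. fst h *\<^sub>R axis i 1 + snd h *\<^sub>R axis j 1))) (at p)"
      by (rule diff_chain_at[OF dE L])
    moreover have "(L \<circ> (\<lambda>h. fst h *\<^sub>R axis i 1 + snd h *\<^sub>R axis j 1)) = (\<lambda>h. 0)"
      using Li by (auto simp: fun_eq_iff linear_add[OF lin] linear_scale[OF lin])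
    ultimately show ?thesis by (simp add: o_def)
  qed
  have "lam (E (y$i, y$j)) = lam (E p0)"
    by (rule has_derivative_zero_unique_connected[OF oA cA g0 yA p0])
  moreover have "E (y$i, y$j) = y"
    unfolding E_def using ij by (auto simp: vec_eq_iff axis_def diagS_mv Tdef)
  ultimately show ?thesis unfolding E_def by simp
qed

lemma Hidx_iff: "k \<in> Hidx \<longleftrightarrow> k \<noteq> 1 \<and> k \<noteq> (2::4)"
  unfolding Hidx_def using exhaust_4[of k] by auto
lemma Vidx_iff: "k \<in> Vidx \<longleftrightarrow> k \<noteq> 3 \<and> k \<noteq> (4::4)"
  unfolding Vidx_def using exhaust_4[of k] by auto

lemma pd_obtain:
  assumes "product_domain D"
  obtains A B where "open A" "connected A" "open B" "connected B"
    "D = {x. (x $ 1, x $ 2) \<in> A \<and> (x $ 3, x $ 4) \<in> B}"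
  using assms unfolding product_domain_def by blast

lemma slice12:
  fixes lam :: "real^4 \<Rightarrow> real"
  assumes D: "D = {x. (x $ 1, x $ 2) \<in> A \<and> (x $ 3, x $ 4) \<in> B}" "open A" "connected A"
    and yD: "y \<in> D" and p0: "p0 \<in> A"
    and z: "\<And>z. z \<in> D \<Longrightarrow> lam differentiable at z \<and> pdx 1 lam z = 0 \<and> pdx 2 lam z = 0"
  shows "lam y = lam (fst p0 *\<^sub>R axis 1 1 + snd p0 *\<^sub>R axis 2 1 + diagS Hidx *v y)"
  apply (rule slice[where i=1 and j=2 and T=Hidx and A=A and D=D])
  apply (rule D(2))
  apply (rule D(3))
  apply simp
  apply (rule Hidx_iff)
  subgoal for p using yD unfolding D(1) by (auto simp: axis_def diagS_mv Hidx_def)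
  subgoal using yD D by auto
  apply (rule p0)
  apply (rule z, assumption)
  done

lemma slice34:
  fixes lam :: "real^4 \<Rightarrow> real"
  assumes D: "D = {x. (x $ 1, x $ 2) \<in> A \<and> (x $ 3, x $ 4) \<in> B}" "open B" "connected B"
    and yD: "y \<in> D" and p0: "p0 \<in> B"
    and z: "\<And>z. z \<in> D \<Longrightarrow> lam differentiable at z \<and> pdx 3 lam z = 0 \<and> pdx 4 lam z = 0"
  shows "lam y = lam (fst p0 *\<^sub>R axis 3 1 + snd p0 *\<^sub>R axis 4 1 + diagS Vidx *v y)"
  apply (rule slice[where i=3 and j=4 and T=Vidx and A=B and D=D])
  apply (rule D(2))
  apply (rule D(3))
  apply simp
  apply (rule Vidx_iff)
  subgoal for p using yD unfolding D(1) by (auto simp: axis_def diagS_mv Vidx_def)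
  subgoal using yD D by auto
  apply (rule p0)
  apply (rule z, assumption)
  done

lemma dep34_of_zero12:
  fixes lam :: "real^4 \<Rightarrow> real"
  assumes pd: "product_domain D"
    and z: "\<And>z. z \<in> D \<Longrightarrow> lam differentiable at z \<and> pdx 1 lam z = 0 \<and> pdx 2 lam z = 0"
  shows "dep34 D lam"
proof (cases "D = {}")
  case True then show ?thesis unfolding dep34_def by auto
next
  case False
  then obtain y0 where y0: "y0 \<in> D" by blast
  obtain A B where AB: "open A" "connected A" "open B" "connected B"
    "D = {x. (x $ 1, x $ 2) \<in> A \<and> (x $ 3, x $ 4) \<in> B}" by (rule pd_obtain[OF pd])
  define p0 where "p0 = (y0$1, y0$2)"
  have p0A: "p0 \<in> A" using y0 AB(5) unfolding p0_def by auto
  define G where "G s t = lam (fst p0 *\<^sub>R axis 1 1 + snd p0 *\<^sub>R axis 2 1 + (s *\<^sub>R axis 3 1 + t *\<^sub>R axis 4 1))" for s t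
  have "\<forall>y\<in>D. lam y = G (y$3) (y$4)" unfolding G_def
  proof
    fix y assume yD: "y \<in> D"
    have "diagS Hidx *v y = y$3 *\<^sub>R axis 3 1 + y$4 *\<^sub>R axis 4 1"
      by (simp add: vec_eq_iff forall_4 diagS_mv Hidx_def axis_def)
    then show "lam y = (\<lambda>s t. lam (fst p0 *\<^sub>R axis 1 1 + snd p0 *\<^sub>R axis 2 1 + (s *\<^sub>R axis 3 1 + t *\<^sub>R axis 4 1))) (y$3) (y$4)"
      using slice12[OF AB(5,1,2) yD p0A z] by simp
  qed
  then show ?thesis unfolding dep34_def by blast
qed

lemma dep12_of_zero34:
  fixes lam :: "real^4 \<Rightarrow> real"
  assumes pd: "product_domain D"
    and z: "\<And>z. z \<in> D \<Longrightarrow> lam differentiable at z \<and> pdx 3 lam z = 0 \<and> pdx 4 lam z = 0"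
  shows "dep12 D lam"
proof (cases "D = {}")
  case True then show ?thesis unfolding dep12_def by auto
next
  case False
  then obtain y0 where y0: "y0 \<in> D" by blast
  obtain A B where AB: "open A" "connected A" "open B" "connected B"
    "D = {x. (x $ 1, x $ 2) \<in> A \<and> (x $ 3, x $ 4) \<in> B}" by (rule pd_obtain[OF pd])
  define p0 where "p0 = (y0$3, y0$4)"
  have p0B: "p0 \<in> B" using y0 AB(5) unfolding p0_def by auto
  define G where "G s t = lam (fst p0 *\<^sub>R axis 3 1 + snd p0 *\<^sub>R axis 4 1 + (s *\<^sub>R axis 1 1 + t *\<^sub>R axis 2 1))" for s t
  have "\<forall>y\<in>D. lam y = G (y$1) (y$2)" unfolding G_def
  proof
    fix y assume yD: "y \<in> D"
    have "diagS Vidx *v y = y$1 *\<^sub>R axis 1 1 + y$2 *\<^sub>R axis 2 1"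
      by (simp add: vec_eq_iff forall_4 diagS_mv Vidx_def axis_def)
    then show "lam y = (\<lambda>s t. lam (fst p0 *\<^sub>R axis 3 1 + snd p0 *\<^sub>R axis 4 1 + (s *\<^sub>R axis 1 1 + t *\<^sub>R axis 2 1))) (y$1) (y$2)"
      using slice34[OF AB(5,3,4) yD p0B z] by simp
  qed
  then show ?thesis unfolding dep12_def by blast
qed

lemma const_of_zero:
  fixes lam :: "real^4 \<Rightarrow> real"
  assumes pd: "product_domain D"
    and z: "\<And>z l. z \<in> D \<Longrightarrow> lam differentiable at z \<and> pdx l lam z = 0"
    and xD: "x \<in> D" and yD: "y \<in> D"
  shows "lam x = lam y"
proof -
  obtain A B where AB: "open A" "connected A" "open B" "connected B"
    "D = {x. (x $ 1, x $ 2) \<in> A \<and> (x $ 3, x $ 4) \<in> B}" by (rule pd_obtain[OF pd])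
  define p0 where "p0 = (x$1, x$2)"
  define q0 where "q0 = (x$3, x$4)"
  have p0A: "p0 \<in> A" and q0B: "q0 \<in> B" using xD AB(5) unfolding p0_def q0_def by auto
  define c :: "real^4" where "c = fst p0 *\<^sub>R axis 1 1 + snd p0 *\<^sub>R axis 2 1 + fst q0 *\<^sub>R axis 3 1 + snd q0 *\<^sub>R axis 4 1"
  have k: "lam w = lam c" if wD: "w \<in> D" for w
  proof -
    define w' where "w' = fst p0 *\<^sub>R axis 1 1 + snd p0 *\<^sub>R axis 2 1 + diagS Hidx *v w"
    have "lam w = lam w'" unfolding w'_def by (rule slice12[OF AB(5,1,2) wD p0A]) (use z in auto)
    have w'D: "w' \<in> D" using wD p0A AB(5) by (auto simp: w'_def axis_def diagS_mv Hidx_def)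
    have "lam w' = lam (fst q0 *\<^sub>R axis 3 1 + snd q0 *\<^sub>R axis 4 1 + diagS Vidx *v w')"
      by (rule slice34[OF AB(5,3,4) w'D q0B]) (use z in auto)
    also have "fst q0 *\<^sub>R axis 3 1 + snd q0 *\<^sub>R axis 4 1 + diagS Vidx *v w' = c"
      by (simp add: w'_def c_def vec_eq_iff forall_4 diagS_mv Vidx_def Hidx_def axis_def)
    finally show ?thesis using \<open>lam w = lam w'\<close> by simp
  qed
  show ?thesis using k[OF xD] k[OF yD] by simp
qed

lemma dep_pdx_gen:
  assumes oD: "open D" and xD: "x \<in> D"
    and ST: "\<And>k. k \<in> T \<longleftrightarrow> k \<notin> S"
    and inv: "\<And>y. y \<in> D \<Longrightarrow> diagS S *v y + diagS T *v x \<in> D \<and> f (diagS S *v y + diagS T *v x) = f y"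
    and df: "f differentiable at x" and lT: "l \<in> T"
  shows "pdx l f x = (0::real)"
proof -
  define P where "P y = diagS S *v y + diagS T *v x" for y
  have Px: "P x = x" unfolding P_def using ST by (auto simp: vec_eq_iff diagS_mv)
  obtain f' where f': "(f has_derivative f') (at x)" using df unfolding differentiable_def by blast
  have dP: "(P has_derivative (\<lambda>h. diagS S *v h)) (at x)"
    unfolding P_def by (auto intro!: derivative_eq_intros bounded_linear.has_derivative[OF matrix_vector_mul_bounded_linear])
  have "((f \<circ> P) has_derivative (f' \<circ> (\<lambda>h. diagS S *v h))) (at x)"
    by (rule diff_chain_at[OF dP]) (simp add: Px f')
  then have "pdx l f x = (f' \<circ> (\<lambda>h. diagS S *v h)) (axis l 1)"
    by (rule pdx_has_on[OF _ oD xD]) (use inv in \<open>simp add: P_def\<close>)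
  also have "diagS S *v axis l 1 = 0" using lT ST by (auto simp: vec_eq_iff diagS_mv axis_def)
  then have "(f' \<circ> (\<lambda>h. diagS S *v h)) (axis l 1) = 0"
    using linear_0[OF has_derivative_linear[OF f']] by simp
  finally show ?thesis .
qed

lemma dep12_pdx:
  assumes pd: "product_domain D" and xD: "x \<in> D" and dep: "dep12 D f"
    and df: "f differentiable at x" and lT: "l \<in> Hidx"
  shows "pdx l f x = (0::real)"
proof (rule dep_pdx_gen[OF product_domain_open[OF pd] xD _ _ df lT])
  show "\<And>k. k \<in> Hidx \<longleftrightarrow> k \<notin> Vidx" by (rule VH_compl)
  obtain A B where AB: "D = {x. (x $ 1, x $ 2) \<in> A \<and> (x $ 3, x $ 4) \<in> B}"
    using pd_obtain[OF pd] by blast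
  obtain F where F: "\<And>y. y \<in> D \<Longrightarrow> f y = F (y$1) (y$2)" using dep unfolding dep12_def by blast
  fix y assume yD: "y \<in> D"
  have c: "(diagS Vidx *v y + diagS Hidx *v x)$1 = y$1" "(diagS Vidx *v y + diagS Hidx *v x)$2 = y$2"
    "(diagS Vidx *v y + diagS Hidx *v x)$3 = x$3" "(diagS Vidx *v y + diagS Hidx *v x)$4 = x$4"
    by (simp_all add: diagS_mv Vidx_def Hidx_def)
  have m: "diagS Vidx *v y + diagS Hidx *v x \<in> D"
    using yD xD unfolding AB mem_Collect_eq c by simp
  moreover have "f (diagS Vidx *v y + diagS Hidx *v x) = f y"
    using F[OF m] F[OF yD] by (simp only: c)
  ultimately show "diagS Vidx *v y + diagS Hidx *v x \<in> D \<and> f (diagS Vidx *v y + diagS Hidx *v x) = f y" by simp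
qed

lemma dep34_pdx:
  assumes pd: "product_domain D" and xD: "x \<in> D" and dep: "dep34 D f"
    and df: "f differentiable at x" and lT: "l \<in> Vidx"
  shows "pdx l f x = (0::real)"
proof (rule dep_pdx_gen[OF product_domain_open[OF pd] xD _ _ df lT])
  show "\<And>k. k \<in> Vidx \<longleftrightarrow> k \<notin> Hidx" using VH_compl by blast
  obtain A B where AB: "D = {x. (x $ 1, x $ 2) \<in> A \<and> (x $ 3, x $ 4) \<in> B}"
    using pd_obtain[OF pd] by blast
  obtain F where F: "\<And>y. y \<in> D \<Longrightarrow> f y = F (y$3) (y$4)" using dep unfolding dep34_def by blast
  fix y assume yD: "y \<in> D"
  have c: "(diagS Hidx *v y + diagS Vidx *v x)$1 = x$1" "(diagS Hidx *v y + diagS Vidx *v x)$2 = x$2"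
    "(diagS Hidx *v y + diagS Vidx *v x)$3 = y$3" "(diagS Hidx *v y + diagS Vidx *v x)$4 = y$4"
    by (simp_all add: diagS_mv Vidx_def Hidx_def)
  have m: "diagS Hidx *v y + diagS Vidx *v x \<in> D"
    using yD xD unfolding AB mem_Collect_eq c by simp
  moreover have "f (diagS Hidx *v y + diagS Vidx *v x) = f y"
    using F[OF m] F[OF yD] by (simp only: c)
  ultimately show "diagS Hidx *v y + diagS Vidx *v x \<in> D \<and> f (diagS Hidx *v y + diagS Vidx *v x) = f y" by simp
qed

lemma transpose_sym:
  assumes "transpose A = A" shows "A $ a $ b = A $ b $ (a::4)"
proof -
  have "A $ a $ b = transpose A $ a $ b" using assms by simp
  also have "\<dots> = A $ b $ a" by (simp add: transpose_def)
  finally show ?thesis .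
qed

lemma lor_det:
  assumes "lorentzian2 Vidx A" shows "detV A \<noteq> 0"
proof -
  obtain u w where uw: "u \<in> coord_plane Vidx" "w \<in> coord_plane Vidx" "bil A u u = -1" "bil A w w = 1" "bil A u w = 0"
    and t: "transpose A = A" using assms unfolding lorentzian2_def by blast
  have s: "A$2$1 = A$1$2" using transpose_sym[OF t] by simp
  have su: "\<And>k. k \<noteq> 1 \<Longrightarrow> k \<noteq> 2 \<Longrightarrow> u$k = 0" and sw: "\<And>k. k \<noteq> 1 \<Longrightarrow> k \<noteq> 2 \<Longrightarrow> w$k = 0"
    using uw(1,2) by (auto simp: coord_plane_iff Vidx_def)
  show ?thesis unfolding detV_def
    by (rule gram_nd[of 1 2 A u w "-1"]) (use s su sw uw in auto)
qed

lemma riem_det: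
  assumes "riemannian2 Hidx A" shows "detH A \<noteq> 0"
proof -
  obtain u w where uw: "u \<in> coord_plane Hidx" "w \<in> coord_plane Hidx" "bil A u u = 1" "bil A w w = 1" "bil A u w = 0"
    and t: "transpose A = A" using assms unfolding riemannian2_def by blast
  have s: "A$4$3 = A$3$4" using transpose_sym[OF t] by simp
  have su: "\<And>k. k \<noteq> 3 \<Longrightarrow> k \<noteq> 4 \<Longrightarrow> u$k = 0" and sw: "\<And>k. k \<noteq> 3 \<Longrightarrow> k \<noteq> 4 \<Longrightarrow> w$k = 0"
    using uw(1,2) by (auto simp: coord_plane_iff Hidx_def)
  show ?thesis unfolding detH_def
    by (rule gram_nd[of 3 4 A u w 1]) (use s su sw uw in auto)
qed

lemma mat_facts:
  assumes bv: "block Vidx V" and lv: "lorentzian2 Vidx V" and bh: "block Hidx H" and rh: "riemannian2 Hidx H"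
    and M: "M = exp (2 * l) *\<^sub>R (V + H)"
  shows "symm M" "bdg M" "detV M \<noteq> 0" "detH M \<noteq> 0"
proof -
  have tv: "transpose V = V" and th: "transpose H = H"
    using lv rh unfolding lorentzian2_def riemannian2_def by auto
  have e: "M $ a $ b = exp (2 * l) * (V $ a $ b + H $ a $ b)" for a b using M by simp
  show "symm M" unfolding symm_def e using transpose_sym[OF tv] transpose_sym[OF th] by simp
  show "bdg M" unfolding bdg_def e using bv bh VH_compl unfolding block_def by auto
  have hz: "H$1$1 = 0" "H$1$2 = 0" "H$2$2 = 0" "V$3$3 = 0" "V$3$4 = 0" "V$4$4 = 0"
    using bv bh unfolding block_def Vidx_def Hidx_def by auto
  have "detV M = exp (2 * l) * exp (2 * l) * detV V" unfolding detV_def e hz by (simp add: algebra_simps)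
  then show "detV M \<noteq> 0" using lor_det[OF lv] by simp
  have "detH M = exp (2 * l) * exp (2 * l) * detH H" unfolding detH_def e hz by (simp add: algebra_simps)
  then show "detH M \<noteq> 0" using riem_det[OF rh] by simp
qed

lemma proj_facts:
  assumes "symm (Gm y)" "bdg (Gm y)" "detV (Gm y) \<noteq> 0" "detH (Gm y) \<noteq> 0"
  shows "vproj Gm y = diagS Vidx" "hproj Gm y = diagS Hidx"
proof -
  show v: "vproj Gm y = diagS Vidx" unfolding vproj_def
  proof (rule gproj_pair[of Gm y "Gm y" Vidx 1 2])
    show "Gm y $ 2 $ 1 = Gm y $ 1 $ 2" using assms(1) unfolding symm_def by simp
    show "Gm y $ 1 $ 1 * Gm y $ 2 $ 2 - Gm y $ 1 $ 2 * Gm y $ 1 $ 2 \<noteq> 0" using assms(3) unfolding detV_def .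
    fix a b assume "a \<notin> Vidx" "b \<in> Vidx"
    then show "Gm y $ a $ b = 0" using assms(2) VH_compl unfolding bdg_def by blast
  qed (auto simp: Vidx_def)
  show "hproj Gm y = diagS Hidx" unfolding hproj_def v by (rule diagS_compl)
qed

lemma invN_props:
  assumes "symm M" "detV M \<noteq> 0" "detH M \<noteq> 0"
  shows "\<And>k l. (k \<in> Hidx \<and> l \<in> Vidx) \<or> (k \<in> Vidx \<and> l \<in> Hidx) \<Longrightarrow> invN M $ k $ l = 0"
    "(\<Sum>a\<in>Vidx. \<Sum>b\<in>Vidx. invN M $ a $ b * M $ a $ b) = 2"
    "(\<Sum>a\<in>Hidx. \<Sum>b\<in>Hidx. invN M $ a $ b * M $ a $ b) = 2"
proof -
  fix k l assume "(k \<in> Hidx \<and> l \<in> Vidx) \<or> (k \<in> Vidx \<and> l \<in> Hidx)"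
  then show "invN M $ k $ l = 0" unfolding invN_def Vidx_def Hidx_def by auto
next
  have s: "M$2$1 = M$1$2" "M$4$3 = M$3$4" using assms(1) unfolding symm_def by auto
  show "(\<Sum>a\<in>Vidx. \<Sum>b\<in>Vidx. invN M $ a $ b * M $ a $ b) = 2"
    using assms(2) unfolding Vidx_def invN_def detV_def by (simp add: s field_simps sq_ne)
  show "(\<Sum>a\<in>Hidx. \<Sum>b\<in>Hidx. invN M $ a $ b * M $ a $ b) = 2"
    using assms(3) unfolding Hidx_def invN_def detH_def by (simp add: s field_simps sq_ne)
qed

lemma smooth_mat_entry: "smooth_mat D A \<Longrightarrow> x \<in> D \<Longrightarrow> (\<lambda>y. A y $ a $ b) differentiable at x"
  unfolding smooth_mat_def using smooth_diff by blast

lemma dep12_entry: "dep12 D A \<Longrightarrow> dep12 D (\<lambda>y. A y $ a $ b)"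
proof -
  assume "dep12 D A"
  then obtain F where F: "\<forall>x\<in>D. A x = F (x$1) (x$2)" unfolding dep12_def by blast
  show ?thesis unfolding dep12_def by (rule exI[of _ "\<lambda>s t. F s t $ a $ b"]) (simp add: F)
qed
lemma dep34_entry: "dep34 D A \<Longrightarrow> dep34 D (\<lambda>y. A y $ a $ b)"
proof -
  assume "dep34 D A"
  then obtain F where F: "\<forall>x\<in>D. A x = F (x$3) (x$4)" unfolding dep34_def by blast
  show ?thesis unfolding dep34_def by (rule exI[of _ "\<lambda>s t. F s t $ a $ b"]) (simp add: F)
qed

lemma zero_iff_inv:
  assumes "M ** N = mat 1"
  shows "((-2::real) *\<^sub>R (N *v d) = 0) \<longleftrightarrow> d = 0"
proof
  assume "(-2::real) *\<^sub>R (N *v d) = 0"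
  then have "N *v d = 0" by simp
  then have "M *v (N *v d) = 0" by simp
  then show "d = 0" using assms by (simp add: matrix_vector_mul_assoc matrix_vector_mul_lid)
qed simp

lemma conf_tr:
  fixes Gm :: "real^4 \<Rightarrow> real^4^4"
  assumes pd: "product_domain D"
    and sl: "smooth_fun D lam" and sv: "smooth_mat D vh" and sh: "smooth_mat D hh"
    and d12: "dep12 D vh" and d34: "dep34 D hh"
    and P: "\<forall>x\<in>D. block Vidx (vh x) \<and> lorentzian2 Vidx (vh x) \<and> block Hidx (hh x) \<and> riemannian2 Hidx (hh x) \<and>
         Gm x = exp (2 * lam x) *\<^sub>R (vh x + hh x)"
    and xD: "x \<in> D"
  shows "(tr_S_v Gm x = 0 \<longleftrightarrow> pdx 3 lam x = 0 \<and> pdx 4 lam x = 0) \<and>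
         (tr_S_h Gm x = 0 \<longleftrightarrow> pdx 1 lam x = 0 \<and> pdx 2 lam x = 0)"
proof -
  have oD: "open D" by (rule product_domain_open[OF pd])
  have mf: "symm (Gm y)" "bdg (Gm y)" "detV (Gm y) \<noteq> 0" "detH (Gm y) \<noteq> 0" if "y \<in> D" for y
    using mat_facts[of "vh y" "hh y" "Gm y" "lam y"] P that by auto
  have pj: "vproj Gm y = diagS Vidx" "hproj Gm y = diagS Hidx" if "y \<in> D" for y
    using proj_facts[of Gm y, OF mf[OF that]] by auto
  note mi = matrix_inv_invN[OF mf[OF xD]]
  note ip = invN_props[OF mf(1,3,4)[OF xD]]
  have sym: "\<And>a b. Gm x $ a $ b = Gm x $ b $ a" using mf(1)[OF xD] unfolding symm_def by blast
  have dl: "lam differentiable at x" by (rule smooth_diff[OF sl xD])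
  have GD: "\<And>y. y \<in> D \<Longrightarrow> Gm y = exp (2 * lam y) *\<^sub>R (vh y + hh y)" using P by blast
  have GD': "\<And>y. y \<in> D \<Longrightarrow> Gm y = exp (2 * lam y) *\<^sub>R (hh y + vh y)" using P by (simp add: add.commute)
  have bv: "\<And>y a b. y \<in> D \<Longrightarrow> a \<notin> Vidx \<or> b \<notin> Vidx \<Longrightarrow> vh y $ a $ b = 0"
    using P unfolding block_def by blast
  have bh: "\<And>y a b. y \<in> D \<Longrightarrow> a \<notin> Hidx \<or> b \<notin> Hidx \<Longrightarrow> hh y $ a $ b = 0"
    using P unfolding block_def by blast
  have trv: "tr_S_v Gm x = (-2) *\<^sub>R (matrix_inv (Gm x) *v (\<chi> l. if l \<in> Hidx then pdx l lam x else 0))"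
    unfolding tr_S_v_def Q_v_def
  proof (rule core[OF oD xD _ GD bv bh dl])
    show "\<And>l. l \<in> Hidx \<longleftrightarrow> l \<notin> Vidx" by (rule VH_compl)
    show "\<And>a b. (\<lambda>y. vh y $ a $ b) differentiable at x" using smooth_mat_entry[OF sv xD] .
    show "\<And>l a b. l \<in> Hidx \<Longrightarrow> pdx l (\<lambda>y. vh y $ a $ b) x = 0"
      using dep12_pdx[OF pd xD dep12_entry[OF d12] smooth_mat_entry[OF sv xD]] by blast
    show "\<And>k l. (k \<in> Hidx \<and> l \<in> Vidx) \<or> (k \<in> Vidx \<and> l \<in> Hidx) \<Longrightarrow> matrix_inv (Gm x) $ k $ l = 0"
      using ip(1) mi(2) by simp
    show "(\<Sum>a\<in>Vidx. \<Sum>b\<in>Vidx. matrix_inv (Gm x) $ a $ b * Gm x $ a $ b) = 2" using ip(2) mi(2) by simp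
    show "\<And>a b. Gm x $ a $ b = Gm x $ b $ a" by (rule sym)
    show "\<And>y. y \<in> D \<Longrightarrow> vproj Gm y = diagS Vidx" using pj by blast
    show "hproj Gm x = diagS Hidx" using pj xD by blast
  qed
  have trh: "tr_S_h Gm x = (-2) *\<^sub>R (matrix_inv (Gm x) *v (\<chi> l. if l \<in> Vidx then pdx l lam x else 0))"
    unfolding tr_S_h_def Q_h_def
  proof (rule core[OF oD xD _ GD' bh bv dl])
    show "\<And>l. l \<in> Vidx \<longleftrightarrow> l \<notin> Hidx" using VH_compl by blast
    show "\<And>a b. (\<lambda>y. hh y $ a $ b) differentiable at x" using smooth_mat_entry[OF sh xD] .
    show "\<And>l a b. l \<in> Vidx \<Longrightarrow> pdx l (\<lambda>y. hh y $ a $ b) x = 0"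
      using dep34_pdx[OF pd xD dep34_entry[OF d34] smooth_mat_entry[OF sh xD]] by blast
    show "\<And>k l. (k \<in> Vidx \<and> l \<in> Hidx) \<or> (k \<in> Hidx \<and> l \<in> Vidx) \<Longrightarrow> matrix_inv (Gm x) $ k $ l = 0"
      using ip(1) mi(2) by auto
    show "(\<Sum>a\<in>Hidx. \<Sum>b\<in>Hidx. matrix_inv (Gm x) $ a $ b * Gm x $ a $ b) = 2" using ip(3) mi(2) by simp
    show "\<And>a b. Gm x $ a $ b = Gm x $ b $ a" by (rule sym)
    show "\<And>y. y \<in> D \<Longrightarrow> hproj Gm y = diagS Hidx" using pj by blast
    show "vproj Gm x = diagS Vidx" using pj xD by blast
  qed
  have inv1: "Gm x ** matrix_inv (Gm x) = mat 1" using invN_works[OF mf[OF xD]] mi(2) by simp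
  have z1: "((\<chi> l. if l \<in> Hidx then pdx l lam x else 0) = 0) \<longleftrightarrow> pdx 3 lam x = 0 \<and> pdx 4 lam x = 0"
    by (simp add: vec_eq_iff forall_4 Hidx_def)
  have z2: "((\<chi> l. if l \<in> Vidx then pdx l lam x else 0) = 0) \<longleftrightarrow> pdx 1 lam x = 0 \<and> pdx 2 lam x = 0"
    by (simp add: vec_eq_iff forall_4 Vidx_def)
  show ?thesis unfolding trv trh zero_iff_inv[OF inv1] z1 z2 by simp
qed

lemma bil_scale: "bil (c *\<^sub>R A) (s *\<^sub>R u) (s *\<^sub>R w) = c * s * s * bil A u w"
  unfolding bil_full by (simp add: sum_distrib_left algebra_simps)

lemma transpose_scale: "transpose A = A \<Longrightarrow> transpose (c *\<^sub>R A) = c *\<^sub>R A"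
  by (simp add: vec_eq_iff transpose_def)

lemma coord_plane_scale: "u \<in> coord_plane S \<Longrightarrow> s *\<^sub>R u \<in> coord_plane S"
  by (simp add: coord_plane_iff)

lemma lor_scale:
  assumes "lorentzian2 S A" "c > 0" shows "lorentzian2 S (c *\<^sub>R A)"
proof -
  obtain u w where uw: "u \<in> coord_plane S" "w \<in> coord_plane S" "bil A u u = -1" "bil A w w = 1" "bil A u w = 0"
    and t: "transpose A = A" using assms unfolding lorentzian2_def by blast
  define s where "s = 1 / sqrt c"
  have cs: "c * s * s = 1" unfolding s_def using assms(2) by (simp add: field_simps)
  have 1: "bil (c *\<^sub>R A) (s *\<^sub>R u) (s *\<^sub>R u) = -1" using bil_scale[of c A s u u] uw(3) cs by simp
  have 2: "bil (c *\<^sub>R A) (s *\<^sub>R w) (s *\<^sub>R w) = 1" using bil_scale[of c A s w w] uw(4) cs by simp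
  have 3: "bil (c *\<^sub>R A) (s *\<^sub>R u) (s *\<^sub>R w) = 0" using bil_scale[of c A s u w] uw(5) by simp
  show ?thesis unfolding lorentzian2_def
    using transpose_scale[OF t, of c] coord_plane_scale[OF uw(1)] coord_plane_scale[OF uw(2)] 1 2 3 by blast
qed

lemma riem_scale:
  assumes "riemannian2 S A" "c > 0" shows "riemannian2 S (c *\<^sub>R A)"
proof -
  obtain u w where uw: "u \<in> coord_plane S" "w \<in> coord_plane S" "bil A u u = 1" "bil A w w = 1" "bil A u w = 0"
    and t: "transpose A = A" using assms unfolding riemannian2_def by blast
  define s where "s = 1 / sqrt c"
  have cs: "c * s * s = 1" unfolding s_def using assms(2) by (simp add: field_simps)
  have 1: "bil (c *\<^sub>R A) (s *\<^sub>R u) (s *\<^sub>R u) = 1" using bil_scale[of c A s u u] uw(3) cs by simp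
  have 2: "bil (c *\<^sub>R A) (s *\<^sub>R w) (s *\<^sub>R w) = 1" using bil_scale[of c A s w w] uw(4) cs by simp
  have 3: "bil (c *\<^sub>R A) (s *\<^sub>R u) (s *\<^sub>R w) = 0" using bil_scale[of c A s u w] uw(5) by simp
  show ?thesis unfolding riemannian2_def
    using transpose_scale[OF t, of c] coord_plane_scale[OF uw(1)] coord_plane_scale[OF uw(2)] 1 2 3 by blast
qed

lemma block_scale: "block S A \<Longrightarrow> block S (c *\<^sub>R A)"
  unfolding block_def by simp

lemma smooth_mat_scale:
  "open D \<Longrightarrow> smooth_fun D lam \<Longrightarrow> smooth_mat D A \<Longrightarrow> smooth_mat D (\<lambda>x. exp (k * lam x) *\<^sub>R A x)"
  unfolding smooth_mat_def using smooth_mult smooth_exp_scale by simp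

lemma dep34_scale: "dep34 D lam \<Longrightarrow> dep34 D A \<Longrightarrow> dep34 D (\<lambda>x. exp (k * lam x) *\<^sub>R A x)"
proof -
  assume "dep34 D lam" "dep34 D A"
  then obtain F G where "\<forall>x\<in>D. lam x = F (x$3) (x$4)" "\<forall>x\<in>D. A x = G (x$3) (x$4)" unfolding dep34_def by blast
  then have "\<forall>x\<in>D. exp (k * lam x) *\<^sub>R A x = (\<lambda>s t. exp (k * F s t) *\<^sub>R G s t) (x$3) (x$4)" by simp
  then show ?thesis unfolding dep34_def by (rule exI[of _ "\<lambda>s t. exp (k * F s t) *\<^sub>R G s t"])
qed

lemma dep12_scale: "dep12 D lam \<Longrightarrow> dep12 D A \<Longrightarrow> dep12 D (\<lambda>x. exp (k * lam x) *\<^sub>R A x)"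
proof -
  assume "dep12 D lam" "dep12 D A"
  then obtain F G where "\<forall>x\<in>D. lam x = F (x$1) (x$2)" "\<forall>x\<in>D. A x = G (x$1) (x$2)" unfolding dep12_def by blast
  then have "\<forall>x\<in>D. exp (k * lam x) *\<^sub>R A x = (\<lambda>s t. exp (k * F s t) *\<^sub>R G s t) (x$1) (x$2)" by simp
  then show ?thesis unfolding dep12_def by (rule exI[of _ "\<lambda>s t. exp (k * F s t) *\<^sub>R G s t"])
qed

lemma exp_cancel: "exp (2 * l) *\<^sub>R (exp (- 2 * l) *\<^sub>R (A::real^4^4)) = A"
  by (simp add: exp_minus field_simps)

lemma exp_cancel2: "(exp (2 * l) * exp (- (2 * l))) *\<^sub>R (A::real^4^4) = A"
  by (simp add: exp_minus field_simps)

lemma nonconst_pdx: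
  fixes lam :: "real^4 \<Rightarrow> real"
  assumes pd: "product_domain D" and sl: "smooth_fun D lam"
    and nc: "\<exists>x\<in>D. \<exists>y\<in>D. lam x \<noteq> lam y"
  shows "\<exists>x\<in>D. \<exists>l. pdx l lam x \<noteq> 0"
proof (rule ccontr)
  assume "\<not> ?thesis"
  then have h: "\<And>z l. z \<in> D \<Longrightarrow> lam differentiable at z \<and> pdx l lam z = 0"
    using smooth_diff[OF sl] by blast
  from nc obtain x y where xy: "x \<in> D" "y \<in> D" "lam x \<noteq> lam y" by blast
  have "lam x = lam y" by (rule const_of_zero[OF pd h xy(1,2)])
  then show False using xy(3) by simp
qed

lemma const_pdx:
  fixes lam :: "real^4 \<Rightarrow> real"
  assumes pd: "product_domain D" and c: "\<forall>x\<in>D. \<forall>y\<in>D. lam x = lam y" and xD: "x \<in> D"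
  shows "pdx l lam x = 0"
proof -
  have "\<And>y. y \<in> D \<Longrightarrow> lam y = lam x" using c xD by blast
  then show ?thesis by (rule pdx_const_on[OF product_domain_open[OF pd] xD])
qed

lemma all4: "(\<forall>l::4. P l) \<longleftrightarrow> P 1 \<and> P 2 \<and> P 3 \<and> P 4" by (rule forall_4)

lemma t_to_conf:
  assumes pd: "product_domain D" and t: "t_warped Gm D"
  shows "conf_product Gm D \<and> class10 Gm D"
proof -
  have oD: "open D" by (rule product_domain_open[OF pd])
  obtain lam vh h where sl: "smooth_fun D lam" and sv: "smooth_mat D vh" and sh: "smooth_mat D h"
    and dl: "dep34 D lam" and nc: "\<exists>x\<in>D. \<exists>y\<in>D. lam x \<noteq> lam y" and dv: "dep12 D vh" and dh: "dep34 D h"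
    and P: "\<forall>x\<in>D. block Vidx (vh x) \<and> lorentzian2 Vidx (vh x) \<and> block Hidx (h x) \<and> riemannian2 Hidx (h x) \<and>
         Gm x = exp (2 * lam x) *\<^sub>R vh x + h x"
    using t unfolding t_warped_def by blast
  define hh where "hh x = exp (- 2 * lam x) *\<^sub>R h x" for x
  have shh: "smooth_mat D hh" unfolding hh_def by (rule smooth_mat_scale[OF oD sl sh])
  have dhh: "dep34 D hh" unfolding hh_def by (rule dep34_scale[OF dl dh])
  have P': "\<forall>x\<in>D. block Vidx (vh x) \<and> lorentzian2 Vidx (vh x) \<and> block Hidx (hh x) \<and> riemannian2 Hidx (hh x) \<and>
         Gm x = exp (2 * lam x) *\<^sub>R (vh x + hh x)"
  proof
    fix x assume xD: "x \<in> D"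
    from P xD have a: "block Vidx (vh x)" "lorentzian2 Vidx (vh x)" "block Hidx (h x)" "riemannian2 Hidx (h x)"
      "Gm x = exp (2 * lam x) *\<^sub>R vh x + h x" by auto
    have eq: "Gm x = exp (2 * lam x) *\<^sub>R (vh x + hh x)" by (simp only: a(5) hh_def scaleR_add_right exp_cancel)
    show "block Vidx (vh x) \<and> lorentzian2 Vidx (vh x) \<and> block Hidx (hh x) \<and> riemannian2 Hidx (hh x) \<and>
         Gm x = exp (2 * lam x) *\<^sub>R (vh x + hh x)"
      unfolding hh_def by (intro conjI a(1,2) block_scale[OF a(3)] riem_scale[OF a(4) exp_gt_zero] eq[unfolded hh_def])
  qed
  have conf: "conf_product Gm D" unfolding conf_product_def
    by (rule exI[of _ lam], rule exI[of _ vh], rule exI[of _ hh], rule conjI[OF sl conjI[OF sv conjI[OF shh conjI[OF dv conjI[OF dhh P']]]]])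
  note ct = conf_tr[OF pd sl sv shh dv dhh P']
  have z12: "pdx 1 lam x = 0 \<and> pdx 2 lam x = 0" if "x \<in> D" for x
    using dep34_pdx[OF pd that dl smooth_diff[OF sl that]] by (simp add: Vidx_def)
  have mH: "minimal_H Gm D" unfolding minimal_H_def
  proof
    fix x assume xD: "x \<in> D"
    have "tr_S_h Gm x = 0 \<longleftrightarrow> pdx 1 lam x = 0 \<and> pdx 2 lam x = 0" using ct[OF xD] by (rule conjunct2)
    then show "tr_S_h Gm x = 0" using z12[OF xD] by simp
  qed
  have nV: "\<not> minimal_V Gm D"
  proof
    assume mV: "minimal_V Gm D"
    have "pdx l lam x = 0" if xD: "x \<in> D" for x l
    proof -
      have "tr_S_v Gm x = 0 \<longleftrightarrow> pdx 3 lam x = 0 \<and> pdx 4 lam x = 0" using ct[OF xD] by (rule conjunct1)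
      moreover have "tr_S_v Gm x = 0" using mV xD unfolding minimal_V_def by simp
      ultimately have "pdx 3 lam x = 0" "pdx 4 lam x = 0" by simp_all
      then show ?thesis using z12[OF xD] exhaust_4[of l] by auto
    qed
    then show False using nonconst_pdx[OF pd sl nc] by blast
  qed
  show ?thesis using conf mH nV unfolding class10_def by simp
qed

lemma conf_to_t:
  assumes pd: "product_domain D" and c: "conf_product Gm D" and cl: "class10 Gm D"
  shows "t_warped Gm D"
proof -
  have oD: "open D" by (rule product_domain_open[OF pd])
  obtain lam vh hh where sl: "smooth_fun D lam" and sv: "smooth_mat D vh" and sh: "smooth_mat D hh"
    and dv: "dep12 D vh" and dh: "dep34 D hh"
    and P: "\<forall>x\<in>D. block Vidx (vh x) \<and> lorentzian2 Vidx (vh x) \<and> block Hidx (hh x) \<and> riemannian2 Hidx (hh x) \<and>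
         Gm x = exp (2 * lam x) *\<^sub>R (vh x + hh x)"
    using c unfolding conf_product_def by blast
  note ct = conf_tr[OF pd sl sv sh dv dh P]
  have mH: "minimal_H Gm D" and nV: "\<not> minimal_V Gm D" using cl unfolding class10_def by simp_all
  have z12: "lam differentiable at z \<and> pdx 1 lam z = 0 \<and> pdx 2 lam z = 0" if zD: "z \<in> D" for z
  proof -
    have "tr_S_h Gm z = 0 \<longleftrightarrow> pdx 1 lam z = 0 \<and> pdx 2 lam z = 0" using ct[OF zD] by (rule conjunct2)
    moreover have "tr_S_h Gm z = 0" using mH zD unfolding minimal_H_def by simp
    ultimately show ?thesis using smooth_diff[OF sl zD] by simp
  qed
  have dl: "dep34 D lam" by (rule dep34_of_zero12[OF pd z12])
  obtain x where xD: "x \<in> D" and trx: "tr_S_v Gm x \<noteq> 0"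
    using nV unfolding minimal_V_def by blast
  have "tr_S_v Gm x = 0 \<longleftrightarrow> pdx 3 lam x = 0 \<and> pdx 4 lam x = 0" using ct[OF xD] by (rule conjunct1)
  then have nz: "\<not> (pdx 3 lam x = 0 \<and> pdx 4 lam x = 0)" using trx by simp
  have nc: "\<exists>x\<in>D. \<exists>y\<in>D. lam x \<noteq> lam y"
  proof (rule ccontr)
    assume "\<not> (\<exists>x\<in>D. \<exists>y\<in>D. lam x \<noteq> lam y)"
    then have "\<forall>x\<in>D. \<forall>y\<in>D. lam x = lam y" by blast
    then have "pdx 3 lam x = 0" "pdx 4 lam x = 0" using const_pdx[OF pd _ xD] by blast+
    then show False using nz by simp
  qed
  define h where "h x = exp (2 * lam x) *\<^sub>R hh x" for x
  have shh: "smooth_mat D h" unfolding h_def by (rule smooth_mat_scale[OF oD sl sh])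
  have dhh: "dep34 D h" unfolding h_def by (rule dep34_scale[OF dl dh])
  have P': "\<forall>x\<in>D. block Vidx (vh x) \<and> lorentzian2 Vidx (vh x) \<and> block Hidx (h x) \<and> riemannian2 Hidx (h x) \<and>
         Gm x = exp (2 * lam x) *\<^sub>R vh x + h x"
  proof
    fix x assume xD: "x \<in> D"
    from P xD have a: "block Vidx (vh x)" "lorentzian2 Vidx (vh x)" "block Hidx (hh x)" "riemannian2 Hidx (hh x)"
      "Gm x = exp (2 * lam x) *\<^sub>R (vh x + hh x)" by auto
    have eq: "Gm x = exp (2 * lam x) *\<^sub>R vh x + h x" by (simp only: a(5) h_def scaleR_add_right)
    show "block Vidx (vh x) \<and> lorentzian2 Vidx (vh x) \<and> block Hidx (h x) \<and> riemannian2 Hidx (h x) \<and>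
         Gm x = exp (2 * lam x) *\<^sub>R vh x + h x"
      unfolding h_def by (intro conjI a(1,2) block_scale[OF a(3)] riem_scale[OF a(4) exp_gt_zero] eq[unfolded h_def])
  qed
  show ?thesis unfolding t_warped_def
    by (rule exI[of _ lam], rule exI[of _ vh], rule exI[of _ h], rule conjI[OF sl conjI[OF sv conjI[OF shh conjI[OF dl conjI[OF nc conjI[OF dv conjI[OF dhh P']]]]]]])
qed

lemma s_to_conf:
  assumes pd: "product_domain D" and t: "s_warped Gm D"
  shows "conf_product Gm D \<and> class01 Gm D"
proof -
  have oD: "open D" by (rule product_domain_open[OF pd])
  obtain lam v hh where sl: "smooth_fun D lam" and sv: "smooth_mat D v" and sh: "smooth_mat D hh"
    and dl: "dep12 D lam" and nc: "\<exists>x\<in>D. \<exists>y\<in>D. lam x \<noteq> lam y" and dv: "dep12 D v" and dh: "dep34 D hh"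
    and P: "\<forall>x\<in>D. block Vidx (v x) \<and> lorentzian2 Vidx (v x) \<and> block Hidx (hh x) \<and> riemannian2 Hidx (hh x) \<and>
         Gm x = v x + exp (2 * lam x) *\<^sub>R hh x"
    using t unfolding s_warped_def by blast
  define vh where "vh x = exp (- 2 * lam x) *\<^sub>R v x" for x
  have svh: "smooth_mat D vh" unfolding vh_def by (rule smooth_mat_scale[OF oD sl sv])
  have dvh: "dep12 D vh" unfolding vh_def by (rule dep12_scale[OF dl dv])
  have P': "\<forall>x\<in>D. block Vidx (vh x) \<and> lorentzian2 Vidx (vh x) \<and> block Hidx (hh x) \<and> riemannian2 Hidx (hh x) \<and>
         Gm x = exp (2 * lam x) *\<^sub>R (vh x + hh x)"
  proof
    fix x assume xD: "x \<in> D"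
    from P xD have a: "block Vidx (v x)" "lorentzian2 Vidx (v x)" "block Hidx (hh x)" "riemannian2 Hidx (hh x)"
      "Gm x = v x + exp (2 * lam x) *\<^sub>R hh x" by auto
    have eq: "Gm x = exp (2 * lam x) *\<^sub>R (vh x + hh x)" by (simp only: a(5) vh_def scaleR_add_right exp_cancel)
    show "block Vidx (vh x) \<and> lorentzian2 Vidx (vh x) \<and> block Hidx (hh x) \<and> riemannian2 Hidx (hh x) \<and>
         Gm x = exp (2 * lam x) *\<^sub>R (vh x + hh x)"
      unfolding vh_def by (intro conjI a(3,4) block_scale[OF a(1)] lor_scale[OF a(2) exp_gt_zero] eq[unfolded vh_def])
  qed
  have conf: "conf_product Gm D" unfolding conf_product_def
    by (rule exI[of _ lam], rule exI[of _ vh], rule exI[of _ hh], rule conjI[OF sl conjI[OF svh conjI[OF sh conjI[OF dvh conjI[OF dh P']]]]])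
  note ct = conf_tr[OF pd sl svh sh dvh dh P']
  have z34: "pdx 3 lam x = 0 \<and> pdx 4 lam x = 0" if "x \<in> D" for x
    using dep12_pdx[OF pd that dl smooth_diff[OF sl that]] by (simp add: Hidx_def)
  have mV: "minimal_V Gm D" unfolding minimal_V_def
  proof
    fix x assume xD: "x \<in> D"
    have "tr_S_v Gm x = 0 \<longleftrightarrow> pdx 3 lam x = 0 \<and> pdx 4 lam x = 0" using ct[OF xD] by (rule conjunct1)
    then show "tr_S_v Gm x = 0" using z34[OF xD] by simp
  qed
  have nH: "\<not> minimal_H Gm D"
  proof
    assume mH: "minimal_H Gm D"
    have "pdx l lam x = 0" if xD: "x \<in> D" for x l
    proof -
      have "tr_S_h Gm x = 0 \<longleftrightarrow> pdx 1 lam x = 0 \<and> pdx 2 lam x = 0" using ct[OF xD] by (rule conjunct2)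
      moreover have "tr_S_h Gm x = 0" using mH xD unfolding minimal_H_def by simp
      ultimately have "pdx 1 lam x = 0" "pdx 2 lam x = 0" by simp_all
      then show ?thesis using z34[OF xD] exhaust_4[of l] by auto
    qed
    then show False using nonconst_pdx[OF pd sl nc] by blast
  qed
  show ?thesis using conf mV nH unfolding class01_def by simp
qed

lemma conf_to_s:
  assumes pd: "product_domain D" and c: "conf_product Gm D" and cl: "class01 Gm D"
  shows "s_warped Gm D"
proof -
  have oD: "open D" by (rule product_domain_open[OF pd])
  obtain lam vh hh where sl: "smooth_fun D lam" and sv: "smooth_mat D vh" and sh: "smooth_mat D hh"
    and dv: "dep12 D vh" and dh: "dep34 D hh"
    and P: "\<forall>x\<in>D. block Vidx (vh x) \<and> lorentzian2 Vidx (vh x) \<and> block Hidx (hh x) \<and> riemannian2 Hidx (hh x) \<and>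
         Gm x = exp (2 * lam x) *\<^sub>R (vh x + hh x)"
    using c unfolding conf_product_def by blast
  note ct = conf_tr[OF pd sl sv sh dv dh P]
  have mV: "minimal_V Gm D" and nH: "\<not> minimal_H Gm D" using cl unfolding class01_def by simp_all
  have z34: "lam differentiable at z \<and> pdx 3 lam z = 0 \<and> pdx 4 lam z = 0" if zD: "z \<in> D" for z
  proof -
    have "tr_S_v Gm z = 0 \<longleftrightarrow> pdx 3 lam z = 0 \<and> pdx 4 lam z = 0" using ct[OF zD] by (rule conjunct1)
    moreover have "tr_S_v Gm z = 0" using mV zD unfolding minimal_V_def by simp
    ultimately show ?thesis using smooth_diff[OF sl zD] by simp
  qed
  have dl: "dep12 D lam" by (rule dep12_of_zero34[OF pd z34])
  obtain x where xD: "x \<in> D" and trx: "tr_S_h Gm x \<noteq> 0"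
    using nH unfolding minimal_H_def by blast
  have "tr_S_h Gm x = 0 \<longleftrightarrow> pdx 1 lam x = 0 \<and> pdx 2 lam x = 0" using ct[OF xD] by (rule conjunct2)
  then have nz: "\<not> (pdx 1 lam x = 0 \<and> pdx 2 lam x = 0)" using trx by simp
  have nc: "\<exists>x\<in>D. \<exists>y\<in>D. lam x \<noteq> lam y"
  proof (rule ccontr)
    assume "\<not> (\<exists>x\<in>D. \<exists>y\<in>D. lam x \<noteq> lam y)"
    then have "\<forall>x\<in>D. \<forall>y\<in>D. lam x = lam y" by blast
    then have "pdx 1 lam x = 0" "pdx 2 lam x = 0" using const_pdx[OF pd _ xD] by blast+
    then show False using nz by simp
  qed
  define v where "v x = exp (2 * lam x) *\<^sub>R vh x" for x
  have svv: "smooth_mat D v" unfolding v_def by (rule smooth_mat_scale[OF oD sl sv])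
  have dvv: "dep12 D v" unfolding v_def by (rule dep12_scale[OF dl dv])
  have P': "\<forall>x\<in>D. block Vidx (v x) \<and> lorentzian2 Vidx (v x) \<and> block Hidx (hh x) \<and> riemannian2 Hidx (hh x) \<and>
         Gm x = v x + exp (2 * lam x) *\<^sub>R hh x"
  proof
    fix x assume xD: "x \<in> D"
    from P xD have a: "block Vidx (vh x)" "lorentzian2 Vidx (vh x)" "block Hidx (hh x)" "riemannian2 Hidx (hh x)"
      "Gm x = exp (2 * lam x) *\<^sub>R (vh x + hh x)" by auto
    have eq: "Gm x = v x + exp (2 * lam x) *\<^sub>R hh x" by (simp only: a(5) v_def scaleR_add_right)
    show "block Vidx (v x) \<and> lorentzian2 Vidx (v x) \<and> block Hidx (hh x) \<and> riemannian2 Hidx (hh x) \<and>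
         Gm x = v x + exp (2 * lam x) *\<^sub>R hh x"
      unfolding v_def by (intro conjI a(3,4) block_scale[OF a(1)] lor_scale[OF a(2) exp_gt_zero] eq[unfolded v_def])
  qed
  show ?thesis unfolding s_warped_def
    by (rule exI[of _ lam], rule exI[of _ v], rule exI[of _ hh], rule conjI[OF sl conjI[OF svv conjI[OF sh conjI[OF dl conjI[OF nc conjI[OF dvv conjI[OF dh P']]]]]]])
qed

lemma lc_mono:
  assumes PQ: "\<And>Gm D. product_domain D \<Longrightarrow> P Gm D \<Longrightarrow> Q Gm D" and L: "locally_chart P U G"
  shows "locally_chart Q U G"
  unfolding locally_chart_def
proof
  fix p assume "p \<in> U"
  then obtain W D \<phi> where h: "open W" "p \<in> W" "W \<subseteq> U" "product_domain D" "diffeo \<phi> D W" "P (pullback G \<phi>) D"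
    using L unfolding locally_chart_def by blast
  have "Q (pullback G \<phi>) D" by (rule PQ[OF h(4) h(6)])
  then show "\<exists>W D \<phi>. open W \<and> p \<in> W \<and> W \<subseteq> U \<and> product_domain D \<and> diffeo \<phi> D W \<and> Q (pullback G \<phi>) D"
    using h(1-5) by blast
qed

theorem proposition9:
  fixes U :: "(real^4) set" and G :: "real^4 \<Rightarrow> real^4^4"
  assumes "spacetime U G"
  shows "(locally_chart t_warped U G \<longleftrightarrow> locally_chart (\<lambda>Gm D. conf_product Gm D \<and> class10 Gm D) U G) \<and>
         (locally_chart s_warped U G \<longleftrightarrow> locally_chart (\<lambda>Gm D. conf_product Gm D \<and> class01 Gm D) U G)"
proof -
  have a: "locally_chart t_warped U G \<Longrightarrow> locally_chart (\<lambda>Gm D. conf_product Gm D \<and> class10 Gm D) U G"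
    by (erule lc_mono[rotated]) (rule t_to_conf)
  have b: "locally_chart (\<lambda>Gm D. conf_product Gm D \<and> class10 Gm D) U G \<Longrightarrow> locally_chart t_warped U G"
    by (erule lc_mono[rotated]) (erule conf_to_t, erule conjunct1, erule conjunct2)
  have c: "locally_chart s_warped U G \<Longrightarrow> locally_chart (\<lambda>Gm D. conf_product Gm D \<and> class01 Gm D) U G"
    by (erule lc_mono[rotated]) (rule s_to_conf)
  have d: "locally_chart (\<lambda>Gm D. conf_product Gm D \<and> class01 Gm D) U G \<Longrightarrow> locally_chart s_warped U G"
    by (erule lc_mono[rotated]) (erule conf_to_s, erule conjunct1, erule conjunct2)
  show ?thesis using a b c d by blast
qed

end
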